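(* Let $0<c<1$. The dynamics on $\mathbb{R}^{|S|}\times\mathbb{R}^{|S|\times|A|}_{>0}$ $$\frac{dv_{s'}}{dt}=-\Big(v_{s'}-\frac1\alpha\sum_{s,a}K_{ass'}u_{sa}\Big),\ s'\in S,$$ $$\frac{du_{s\cdot}}{dt}=-\tilde u_s\big(\mathrm{diag}(\pi_{s\cdot})-c\,\pi_{s\cdot}\pi_{s\cdot}^{\mathsf T}\big)\Big(\log\frac{u_{s\cdot}}{\tilde u_s}-\frac1\tau\Big(r_{s\cdot}-\sum_{s'}K_{\cdot ss'}v_{s'}\Big)\Big),\ s\in S,$$ with $\pi_{sa}=u_{sa}/\tilde u_s$, converges to $(v^*,u^* )$ at rate $O(e^{-\kappa t})$ for some $\kappa>0$, where $(v^*,u^* )$ is the unique saddle point of $\min_v\max_u E(v,u)$.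
   Context: Finite MDP: state space $S$, action space $A$, transition probabilities $P_{ass'}$ (with $\sum_{s'}P_{ass'}=1$), rewards $r_{sa}\ge0$, discount $\gamma\in(0,1)$, regularization $\tau>0$, and $\alpha>0$. $K_{ass'}=\delta_{ss'}-\gamma P_{ass'}$, $\tilde u_s=\sum_a u_{sa}$. For fixed $s$, $u_{s\cdot},\pi_{s\cdot},r_{s\cdot}\in\mathbb{R}^{|A|}$ are the vectors indexed by $a$, $K_{\cdot ss'}\in\mathbb{R}^{|A|}$ has $a$-th entry $K_{ass'}$, logarithms and divisions of vectors are entrywise, and $\mathrm{diag}(x)$ is the diagonal matrix with diagonal $x$. $E(v,u)=\frac{\alpha}{2}\sum_s v_s^2+\sum_{s,a}u_{sa}(r_{sa}-\sum_{s'}K_{ass'}v_{s'})-\tau\sum_{s,a}u_{sa}\log(u_{sa}/\tilde u_s)$; this min-max problem has a unique saddle point $(v^*,u^* )$. *)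

theory Defs
  imports "HOL-Analysis.Analysis"
begin

text \<open>Finite MDP. States have type 's::finite, actions 'a::finite.
  P a s s' is the transition probability P_{ass'}; r s a is r_{sa};
  v :: 's => real; u s a is u_{sa}.\<close>

definition Kmat :: "real \<Rightarrow> ('a \<Rightarrow> 's \<Rightarrow> 's \<Rightarrow> real) \<Rightarrow> 'a \<Rightarrow> 's \<Rightarrow> 's \<Rightarrow> real" where
  "Kmat \<gamma> P a s s' = (if s = s' then 1 else 0) - \<gamma> * P a s s'"

definition utilde :: "('s \<Rightarrow> 'a::finite \<Rightarrow> real) \<Rightarrow> 's \<Rightarrow> real" where
  "utilde u s = (\<Sum>a\<in>UNIV. u s a)"

definition Efun ::
  "real \<Rightarrow> real \<Rightarrow> real \<Rightarrow> ('a::finite \<Rightarrow> 's::finite \<Rightarrow> 's \<Rightarrow> real) \<Rightarrow> ('s \<Rightarrow> 'a \<Rightarrow> real)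
    \<Rightarrow> ('s \<Rightarrow> real) \<Rightarrow> ('s \<Rightarrow> 'a \<Rightarrow> real) \<Rightarrow> real" where
  "Efun \<alpha> \<gamma> \<tau> P r v u =
     \<alpha> / 2 * (\<Sum>s\<in>UNIV. (v s)\<^sup>2)
     + (\<Sum>s\<in>UNIV. \<Sum>a\<in>UNIV. u s a * (r s a - (\<Sum>s'\<in>UNIV. Kmat \<gamma> P a s s' * v s')))
     - \<tau> * (\<Sum>s\<in>UNIV. \<Sum>a\<in>UNIV. u s a * ln (u s a / utilde u s))"

definition pos_u :: "('s \<Rightarrow> 'a \<Rightarrow> real) \<Rightarrow> bool" where
  "pos_u u \<longleftrightarrow> (\<forall>s a. u s a > 0)"

definition is_saddle ::
  "real \<Rightarrow> real \<Rightarrow> real \<Rightarrow> ('a::finite \<Rightarrow> 's::finite \<Rightarrow> 's \<Rightarrow> real) \<Rightarrow> ('s \<Rightarrow> 'a \<Rightarrow> real)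
    \<Rightarrow> ('s \<Rightarrow> real) \<Rightarrow> ('s \<Rightarrow> 'a \<Rightarrow> real) \<Rightarrow> bool" where
  "is_saddle \<alpha> \<gamma> \<tau> P r vs us \<longleftrightarrow> pos_u us \<and>
     (\<forall>v u. pos_u u \<longrightarrow>
        Efun \<alpha> \<gamma> \<tau> P r vs u \<le> Efun \<alpha> \<gamma> \<tau> P r vs us \<and>
        Efun \<alpha> \<gamma> \<tau> P r vs us \<le> Efun \<alpha> \<gamma> \<tau> P r v us)"

definition v_rhs ::
  "real \<Rightarrow> real \<Rightarrow> ('a::finite \<Rightarrow> 's::finite \<Rightarrow> 's \<Rightarrow> real)
    \<Rightarrow> ('s \<Rightarrow> real) \<Rightarrow> ('s \<Rightarrow> 'a \<Rightarrow> real) \<Rightarrow> 's \<Rightarrow> real" where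
  "v_rhs \<alpha> \<gamma> P v u s' =
     - (v s' - 1 / \<alpha> * (\<Sum>s\<in>UNIV. \<Sum>a\<in>UNIV. Kmat \<gamma> P a s s' * u s a))"

definition u_rhs ::
  "real \<Rightarrow> real \<Rightarrow> real \<Rightarrow> ('a::finite \<Rightarrow> 's::finite \<Rightarrow> 's \<Rightarrow> real) \<Rightarrow> ('s \<Rightarrow> 'a \<Rightarrow> real)
    \<Rightarrow> ('s \<Rightarrow> real) \<Rightarrow> ('s \<Rightarrow> 'a \<Rightarrow> real) \<Rightarrow> 's \<Rightarrow> 'a \<Rightarrow> real" where
  "u_rhs c \<gamma> \<tau> P r v u s a =
     (let ut = utilde u s;
          \<pi> = (\<lambda>b. u s b / ut);
          g = (\<lambda>b. ln (u s b / ut) - 1 / \<tau> * (r s b - (\<Sum>s'\<in>UNIV. Kmat \<gamma> P b s s' * v s')));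
          M = (\<lambda>a b. (if a = b then \<pi> a else 0) - c * \<pi> a * \<pi> b)
      in - ut * (\<Sum>b\<in>UNIV. M a b * g b))"

end

theory Submission
  imports Defs
begin


lemma ln_eq_minus_one_imp: assumes "0 < (x::real)" "ln x = x - 1" shows "x = 1"
proof -
  have "ln (sqrt x) = ln x / 2" using assms by (simp add: ln_sqrt)
  moreover have "ln (sqrt x) \<le> sqrt x - 1" using assms by (intro ln_le_minus_one) simp
  ultimately have "x - 1 \<le> 2 * sqrt x - 2" using assms by simp
  moreover have "x = (sqrt x)^2" using assms by simp
  ultimately have "(sqrt x - 1)^2 \<le> 0" by (simp add: power2_eq_square algebra_simps)
  hence "sqrt x = 1" by simp
  thus ?thesis using \<open>x = (sqrt x)^2\<close> by simp
qed

definition phi :: "real \<Rightarrow> real \<Rightarrow> real" where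
  "phi x y = x * ln (x / y) - x + y"

lemma phi_nonneg: assumes "0 < x" "0 < y" shows "0 \<le> phi x y"
proof -
  have "ln (y / x) \<le> y / x - 1" using assms by (intro ln_le_minus_one) simp
  moreover have "ln (x / y) = - ln (y / x)" using assms by (simp add: ln_div)
  ultimately have "x * ln (x / y) \<ge> x * (1 - y / x)" using assms
    by (intro mult_left_mono) auto
  moreover have "x * (1 - y / x) = x - y" using assms by (simp add: field_simps)
  ultimately show ?thesis by (simp add: phi_def)
qed

lemma phi_upper: assumes "0 < x" "0 < y" shows "phi x y \<le> (x - y)^2 / y"
proof -
  have "ln (x / y) \<le> x / y - 1" using assms by (intro ln_le_minus_one) simp
  hence "x * ln (x / y) \<le> x * (x / y - 1)" using assms by (intro mult_left_mono) auto
  thus ?thesis using assms by (simp add: phi_def field_simps power2_eq_square)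
qed

lemma phi_lower: assumes "0 < x" "0 < y" "x \<le> M" "y \<le> M"
  shows "(x - y)^2 \<le> 4 * M * phi x y"
proof -
  have sx: "sqrt x > 0" "sqrt y > 0" using assms by auto
  have "ln (sqrt y / sqrt x) \<le> sqrt y / sqrt x - 1" using sx by (intro ln_le_minus_one) simp
  moreover have "ln (x / y) = - 2 * ln (sqrt y / sqrt x)"
    using assms by (simp add: ln_div ln_sqrt)
  ultimately have "ln (x / y) \<ge> 2 * (1 - sqrt y / sqrt x)" by simp
  hence "x * ln (x / y) \<ge> x * (2 * (1 - sqrt y / sqrt x))" using assms by (intro mult_left_mono) auto
  also have "x * (2 * (1 - sqrt y / sqrt x)) = 2 * x - 2 * sqrt x * sqrt y"
    using sx assms by (simp add: field_simps)
  finally have ph: "phi x y \<ge> (sqrt x - sqrt y)^2" using assms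
    by (simp add: phi_def power2_eq_square algebra_simps)
  have pm: "(sqrt x - sqrt y) * (sqrt x + sqrt y) = x - y" using assms
    by (simp add: algebra_simps)
  have "(x - y)^2 = (sqrt x - sqrt y)^2 * (sqrt x + sqrt y)^2"
    by (subst pm[symmetric]) (simp only: power_mult_distrib)
  also have "(sqrt x + sqrt y)^2 \<le> 4 * M"
  proof -
    have e: "(sqrt x + sqrt y)^2 = 2 * ((sqrt x)^2 + (sqrt y)^2) - (sqrt x - sqrt y)^2"
      by (simp add: power2_eq_square algebra_simps)
    have "0 \<le> (sqrt x - sqrt y)^2" by simp
    hence "(sqrt x + sqrt y)^2 \<le> 2 * ((sqrt x)^2 + (sqrt y)^2)" using e by linarith
    also have "\<dots> \<le> 4 * M" using assms by simp
    finally show ?thesis .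
  qed
  hence "(sqrt x - sqrt y)^2 * (sqrt x + sqrt y)^2 \<le> (sqrt x - sqrt y)^2 * (4 * M)"
    by (intro mult_left_mono) auto
  also have "\<dots> \<le> phi x y * (4 * M)" using ph assms by (intro mult_right_mono) auto
  finally show ?thesis by (simp add: mult.commute)
qed

lemma ln_lipschitz: fixes x y p :: real assumes "0 < p" "p \<le> x" "p \<le> y"
  shows "\<bar>ln x - ln y\<bar> \<le> \<bar>x - y\<bar> / p"
proof -
  have "ln x - ln y \<le> (x - y) / y" using assms ln_diff_le[of x y] by auto
  also have "\<dots> \<le> \<bar>x - y\<bar> / p" using assms
    by (smt (verit, best) divide_nonneg_pos frac_le zero_less_divide_iff)
  finally have 1: "ln x - ln y \<le> \<bar>x - y\<bar> / p" .
  have "ln y - ln x \<le> (y - x) / x" using assms ln_diff_le[of y x] by auto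
  also have "\<dots> \<le> \<bar>x - y\<bar> / p" using assms
    by (smt (verit, best) divide_nonneg_pos frac_le zero_less_divide_iff)
  finally show ?thesis using 1 by linarith
qed

lemma sum_sq_le_l1sq: fixes f :: "'i \<Rightarrow> real" assumes "finite A"
  shows "(\<Sum>i\<in>A. (f i)^2) \<le> (\<Sum>i\<in>A. \<bar>f i\<bar>)^2"
proof -
  have "(\<Sum>i\<in>A. (f i)^2) \<le> (\<Sum>i\<in>A. \<bar>f i\<bar> * (\<Sum>j\<in>A. \<bar>f j\<bar>))"
  proof (rule sum_mono)
    fix i assume "i \<in> A"
    hence "\<bar>f i\<bar> \<le> (\<Sum>j\<in>A. \<bar>f j\<bar>)" using assms by (intro member_le_sum) auto
    thus "(f i)^2 \<le> \<bar>f i\<bar> * (\<Sum>j\<in>A. \<bar>f j\<bar>)"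
      by (metis abs_ge_zero mult_left_mono power2_abs power2_eq_square)
  qed
  thus ?thesis by (simp add: power2_eq_square sum_distrib_right)
qed

lemma l1sq_le_card_sum_sq: fixes f :: "'i \<Rightarrow> real"
  shows "(\<Sum>i\<in>A. \<bar>f i\<bar>)^2 \<le> real (card A) * (\<Sum>i\<in>A. (f i)^2)"
  using Cauchy_Schwarz_ineq_sum[of "\<lambda>_. 1" "\<lambda>i. \<bar>f i\<bar>" A] by simp

lemma sum_if_upd: fixes f :: "'i::finite \<Rightarrow> real"
  shows "(\<Sum>s\<in>UNIV. (if s = s0 then a else f s)) = (\<Sum>s\<in>UNIV. f s) - f s0 + a"
proof -
  have "(\<Sum>s\<in>UNIV. (if s = s0 then a else f s)) = (\<Sum>s\<in>UNIV. f s + (if s = s0 then a - f s0 else 0))"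
    by (intro sum.cong) auto
  thus ?thesis by (simp add: sum.distrib)
qed

lemma mono_from_deriv:
  fixes f f' :: "real \<Rightarrow> real"
  assumes d: "\<And>t. t \<ge> 0 \<Longrightarrow> (f has_real_derivative f' t) (at t within {0..})"
    and n: "\<And>t. t \<ge> 0 \<Longrightarrow> f' t \<le> 0" and t: "t \<ge> 0"
  shows "f t \<le> f 0"
proof (rule DERIV_nonpos_imp_decreasing_open[OF t])
  fix x assume x: "0 < x" "x < t"
  have "at x within {0..} = at x"
    using x by (intro at_within_interior) auto
  thus "\<exists>y. (f has_real_derivative y) (at x) \<and> y \<le> 0" using d[of x] n[of x] x by auto
next
  have "continuous_on {0..} f"
    using d by (auto simp: continuous_on_eq_continuous_within intro: DERIV_continuous)
  thus "continuous_on {0..t} f" by (rule continuous_on_subset) auto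
qed




locale mdp =
  fixes P :: "'a::finite \<Rightarrow> 's::finite \<Rightarrow> 's \<Rightarrow> real"
    and r :: "'s \<Rightarrow> 'a \<Rightarrow> real"
    and \<gamma> \<tau> \<alpha> c :: real
    and vs :: "'s \<Rightarrow> real" and us :: "'s \<Rightarrow> 'a \<Rightarrow> real"
    and V :: "real \<Rightarrow> 's \<Rightarrow> real" and U :: "real \<Rightarrow> 's \<Rightarrow> 'a \<Rightarrow> real"
  assumes P_nonneg: "\<And>a s s'. P a s s' \<ge> 0"
    and P_stoch: "\<And>a s. (\<Sum>s'\<in>UNIV. P a s s') = 1"
    and r_nonneg: "\<And>s a. r s a \<ge> 0"
    and gamma: "0 < \<gamma>" "\<gamma> < 1"
    and tau: "\<tau> > 0"
    and alpha: "\<alpha> > 0"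
    and c: "0 < c" "c < 1"
    and saddle: "is_saddle \<alpha> \<gamma> \<tau> P r vs us"
    and U_pos: "\<And>t. t \<ge> 0 \<Longrightarrow> pos_u (U t)"
    and V_ode: "\<And>t s'. t \<ge> 0 \<Longrightarrow>
        ((\<lambda>t. V t s') has_real_derivative v_rhs \<alpha> \<gamma> P (V t) (U t) s') (at t within {0..})"
    and U_ode: "\<And>t s a. t \<ge> 0 \<Longrightarrow>
        ((\<lambda>t. U t s a) has_real_derivative u_rhs c \<gamma> \<tau> P r (V t) (U t) s a) (at t within {0..})"
begin

abbreviation K where "K \<equiv> Kmat \<gamma> P"

lemma K_abs: "\<bar>K a s s'\<bar> \<le> 1"
proof -
  have "P a s s' \<le> 1"
  proof -
    have "P a s s' \<le> (\<Sum>x\<in>UNIV. P a s x)" by (rule member_le_sum) (auto intro: P_nonneg)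
    thus ?thesis using P_stoch by simp
  qed
  hence "\<gamma> * P a s s' \<le> 1" using gamma P_nonneg[of a s s'] by (intro mult_le_one) auto
  moreover have "0 \<le> \<gamma> * P a s s'" using gamma P_nonneg[of a s s'] by simp
  ultimately show ?thesis unfolding Kmat_def by auto
qed

lemma us_pos: "us s a > 0" using saddle unfolding is_saddle_def pos_u_def by auto

lemma saddle_v: "Efun \<alpha> \<gamma> \<tau> P r vs us \<le> Efun \<alpha> \<gamma> \<tau> P r v us"
  using saddle unfolding is_saddle_def by auto

lemma saddle_u: "pos_u u \<Longrightarrow> Efun \<alpha> \<gamma> \<tau> P r vs u \<le> Efun \<alpha> \<gamma> \<tau> P r vs us"
  using saddle unfolding is_saddle_def by auto

lemma foc_v: "\<alpha> * vs s0 = (\<Sum>s\<in>UNIV. \<Sum>a\<in>UNIV. K a s s0 * us s a)"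
proof -
  define B where "B = (\<Sum>s\<in>UNIV. \<Sum>a\<in>UNIV. K a s s0 * us s a)"
  define d where "d = \<alpha> * vs s0 - B"
  have key: "Efun \<alpha> \<gamma> \<tau> P r (\<lambda>s. vs s + h * (if s = s0 then 1 else 0)) us
      = Efun \<alpha> \<gamma> \<tau> P r vs us + h * d + \<alpha> / 2 * h^2" for h
  proof -
    have 1: "(\<Sum>s\<in>UNIV. (vs s + h * (if s = s0 then 1 else 0))\<^sup>2)
        = (\<Sum>s\<in>UNIV. (vs s)\<^sup>2) + 2 * h * vs s0 + h^2"
    proof -
      have "(\<Sum>s\<in>UNIV. (vs s + h * (if s = s0 then 1 else 0))\<^sup>2)
        = (\<Sum>s\<in>UNIV. (if s = s0 then (vs s0 + h)\<^sup>2 else (vs s)\<^sup>2))"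
        by (intro sum.cong) auto
      also have "\<dots> = (\<Sum>s\<in>UNIV. (vs s)\<^sup>2) - (vs s0)\<^sup>2 + (vs s0 + h)\<^sup>2"
        by (rule sum_if_upd)
      finally show ?thesis by (simp add: power2_eq_square algebra_simps)
    qed
    have 2: "(\<Sum>s\<in>UNIV. \<Sum>a\<in>UNIV. us s a * (r s a - (\<Sum>s'\<in>UNIV. K a s s' * (vs s' + h * (if s' = s0 then 1 else 0)))))
       = (\<Sum>s\<in>UNIV. \<Sum>a\<in>UNIV. us s a * (r s a - (\<Sum>s'\<in>UNIV. K a s s' * vs s'))) - h * B"
    proof -
      have inner: "(\<Sum>s'\<in>UNIV. K a s s' * (vs s' + h * (if s' = s0 then 1 else 0)))
          = (\<Sum>s'\<in>UNIV. K a s s' * vs s') + h * K a s s0" for a s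
      proof -
        have "(\<Sum>s'\<in>UNIV. K a s s' * (vs s' + h * (if s' = s0 then 1 else 0)))
          = (\<Sum>s'\<in>UNIV. (if s' = s0 then K a s s0 * (vs s0 + h) else K a s s' * vs s'))"
          by (intro sum.cong) auto
        also have "\<dots> = (\<Sum>s'\<in>UNIV. K a s s' * vs s') - K a s s0 * vs s0 + K a s s0 * (vs s0 + h)"
          by (rule sum_if_upd)
        finally show ?thesis by (simp add: algebra_simps)
      qed
      have pt: "us s a * (r s a - ((\<Sum>s'\<in>UNIV. K a s s' * vs s') + h * K a s s0))
         = us s a * (r s a - (\<Sum>s'\<in>UNIV. K a s s' * vs s')) - h * (K a s s0 * us s a)" for s a
        by (simp add: algebra_simps)
      show ?thesis unfolding inner pt
        by (simp only: sum_subtractf sum_distrib_left[symmetric] B_def)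
    qed
    define X where "X = (\<Sum>s\<in>UNIV. \<Sum>a\<in>UNIV. us s a * (r s a - (\<Sum>s'\<in>UNIV. K a s s' * vs s')))"
    define T where "T = (\<Sum>s\<in>UNIV. \<Sum>a\<in>UNIV. us s a * ln (us s a / utilde us s))"
    define S where "S = (\<Sum>s\<in>UNIV. (vs s)\<^sup>2)"
    show ?thesis unfolding Efun_def 1 2 d_def X_def[symmetric] T_def[symmetric] S_def[symmetric]
      by (simp add: algebra_simps power2_eq_square)
  qed
  have "Efun \<alpha> \<gamma> \<tau> P r vs us \<le> Efun \<alpha> \<gamma> \<tau> P r vs us + (- d / \<alpha>) * d + \<alpha> / 2 * (- d / \<alpha>)^2"
    using saddle_v[of "\<lambda>s. vs s + (- d / \<alpha>) * (if s = s0 then 1 else 0)"] key[of "- d / \<alpha>"] by simp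
  hence "0 \<le> - (d * d) / (2 * \<alpha>)" using alpha by (simp add: field_simps power2_eq_square)
  hence "d * d \<le> 0" using alpha by (simp add: divide_le_0_iff)
  hence "d = 0" by (auto simp: mult_le_0_iff)
  thus ?thesis unfolding d_def B_def by simp
qed



definition q :: "'s \<Rightarrow> 'a \<Rightarrow> real" where
  "q s a = r s a - (\<Sum>s'\<in>UNIV. K a s s' * vs s')"

definition Grow :: "'s \<Rightarrow> ('a \<Rightarrow> real) \<Rightarrow> real" where
  "Grow s w = (\<Sum>a\<in>UNIV. w a * q s a) - \<tau> * (\<Sum>a\<in>UNIV. w a * ln (w a / (\<Sum>b\<in>UNIV. w b)))"

lemma Efun_rows: "Efun \<alpha> \<gamma> \<tau> P r vs u = \<alpha> / 2 * (\<Sum>s\<in>UNIV. (vs s)\<^sup>2) + (\<Sum>s\<in>UNIV. Grow s (u s))"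
  unfolding Efun_def Grow_def q_def utilde_def
  by (simp add: sum_subtractf sum_distrib_left)

lemma Grow_le: assumes "\<And>a. w a > 0" shows "Grow s0 w \<le> Grow s0 (us s0)"
proof -
  have pu: "pos_u (us(s0 := w))" using assms us_pos unfolding pos_u_def by auto
  have "(\<Sum>s\<in>UNIV. Grow s ((us(s0 := w)) s)) = (\<Sum>s\<in>UNIV. (if s = s0 then Grow s0 w else Grow s (us s)))"
    by (intro sum.cong) auto
  also have "\<dots> = (\<Sum>s\<in>UNIV. Grow s (us s)) - Grow s0 (us s0) + Grow s0 w" by (rule sum_if_upd)
  finally have e: "(\<Sum>s\<in>UNIV. Grow s ((us(s0 := w)) s)) = (\<Sum>s\<in>UNIV. Grow s (us s)) - Grow s0 (us s0) + Grow s0 w" .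
  show ?thesis using saddle_u[OF pu] unfolding Efun_rows e by simp
qed

lemma Grow_scale: assumes "l > 0" shows "Grow s (\<lambda>a. l * w a) = l * Grow s w"
proof -
  have "(\<Sum>b\<in>UNIV. l * w b) = l * (\<Sum>b\<in>UNIV. w b)" by (simp add: sum_distrib_left)
  hence "l * w a / (\<Sum>b\<in>UNIV. l * w b) = w a / (\<Sum>b\<in>UNIV. w b)" for a using assms by simp
  thus ?thesis unfolding Grow_def
    by (simp add: sum_distrib_left algebra_simps)
qed

lemma Grow_us_zero: "Grow s0 (us s0) = 0"
proof -
  have "Grow s0 (\<lambda>a. 2 * us s0 a) \<le> Grow s0 (us s0)" using us_pos by (intro Grow_le) simp
  moreover have "Grow s0 (\<lambda>a. (1/2) * us s0 a) \<le> Grow s0 (us s0)" using us_pos by (intro Grow_le) simp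
  moreover have "Grow s0 (\<lambda>a. 2 * us s0 a) = 2 * Grow s0 (us s0)" by (rule Grow_scale) simp
  moreover have "Grow s0 (\<lambda>a. (1/2) * us s0 a) = (1/2) * Grow s0 (us s0)" by (rule Grow_scale) simp
  ultimately show ?thesis by linarith
qed

lemma uts_pos: "utilde us s > 0"
  unfolding utilde_def using us_pos by (intro sum_pos) auto

lemma foc_u: "\<tau> * ln (us s0 a0 / utilde us s0) = r s0 a0 - (\<Sum>s'\<in>UNIV. K a0 s0 s' * vs s')"
proof -
  define w where "w a = exp (q s0 a / \<tau>)" for a
  define Z where "Z = (\<Sum>a\<in>UNIV. w a)"
  have wpos: "w a > 0" for a unfolding w_def by simp
  have Zpos: "Z > 0" unfolding Z_def using wpos by (intro sum_pos) auto
  have lnw: "ln (w a / Z) = q s0 a / \<tau> - ln Z" for a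
    using Zpos wpos unfolding w_def by (simp add: ln_div)
  have "Grow s0 w = (\<Sum>a\<in>UNIV. w a * q s0 a) - \<tau> * (\<Sum>a\<in>UNIV. w a * (q s0 a / \<tau> - ln Z))"
    unfolding Grow_def Z_def[symmetric] lnw by simp
  also have "\<dots> = \<tau> * Z * ln Z" using tau unfolding Z_def
    by (simp add: algebra_simps sum_subtractf sum_distrib_left sum_distrib_right sum_divide_distrib)
  finally have "\<tau> * Z * ln Z \<le> 0" using Grow_le[of w s0] wpos Grow_us_zero by simp
  hence "ln Z \<le> 0" using tau Zpos by (simp add: mult_le_0_iff zero_less_mult_iff)
  hence Z1: "Z \<le> 1" using Zpos by simp
  define ut where "ut = utilde us s0"
  have utpos: "ut > 0" unfolding ut_def by (rule uts_pos)
  define pi where "pi a = us s0 a / ut" for a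
  have pipos: "pi a > 0" for a unfolding pi_def using utpos us_pos by simp
  have pisum: "(\<Sum>a\<in>UNIV. pi a) = 1" unfolding pi_def ut_def utilde_def using uts_pos[of s0]
    by (simp add: sum_divide_distrib[symmetric] utilde_def)
  define x where "x a = w a / pi a" for a
  have xpos: "x a > 0" for a unfolding x_def using wpos pipos by simp
  have lnx: "ln (x a) = q s0 a / \<tau> - ln (pi a)" for a
    unfolding x_def w_def using pipos[of a] by (simp add: ln_div)
  have "0 = Grow s0 (us s0)" using Grow_us_zero by simp
  also have "Grow s0 (us s0) = ut * \<tau> * (\<Sum>a\<in>UNIV. pi a * ln (x a))"
  proof -
    have usum: "(\<Sum>b\<in>UNIV. us s0 b) = ut" unfolding ut_def utilde_def ..
    have "us s0 a = ut * pi a" for a unfolding pi_def using utpos by simp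
    hence "Grow s0 (us s0) = (\<Sum>a\<in>UNIV. ut * pi a * q s0 a) - \<tau> * (\<Sum>a\<in>UNIV. ut * pi a * ln (pi a))"
      unfolding Grow_def usum using utpos by (simp add: pi_def)
    also have "\<dots> = ut * \<tau> * (\<Sum>a\<in>UNIV. pi a * (q s0 a / \<tau> - ln (pi a)))" using tau
      by (simp add: algebra_simps sum_subtractf sum_distrib_left)
    finally show ?thesis unfolding lnx .
  qed
  finally have s0: "(\<Sum>a\<in>UNIV. pi a * ln (x a)) = 0" using utpos tau by simp
  have "(\<Sum>a\<in>UNIV. pi a * (x a - 1)) = Z - 1"
  proof -
    have "pi a * (x a - 1) = w a - pi a" for a unfolding x_def using pipos[of a] by (simp add: field_simps)
    thus ?thesis unfolding Z_def using pisum by (simp add: sum_subtractf)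
  qed
  moreover have "(\<Sum>a\<in>UNIV. pi a * (x a - 1 - ln (x a))) = (\<Sum>a\<in>UNIV. pi a * (x a - 1)) - (\<Sum>a\<in>UNIV. pi a * ln (x a))"
    by (simp add: algebra_simps sum_subtractf sum.distrib)
  ultimately have s1: "(\<Sum>a\<in>UNIV. pi a * (x a - 1 - ln (x a))) \<le> 0" using s0 Z1 by simp
  have tnn: "\<And>a. a \<in> UNIV \<Longrightarrow> 0 \<le> pi a * (x a - 1 - ln (x a))"
    using pipos xpos ln_le_minus_one by (simp add: less_imp_le)
  hence "(\<Sum>a\<in>UNIV. pi a * (x a - 1 - ln (x a))) = 0" using s1
    by (meson order_antisym sum_nonneg)
  hence "pi a0 * (x a0 - 1 - ln (x a0)) = 0"
    using sum_nonneg_eq_0_iff[of UNIV "\<lambda>a. pi a * (x a - 1 - ln (x a))"] tnn by simp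
  hence "ln (x a0) = x a0 - 1" using pipos[of a0] by simp
  hence "x a0 = 1" using xpos ln_eq_minus_one_imp by blast
  hence "ln (pi a0) = q s0 a0 / \<tau>" using lnx[of a0] by simp
  thus ?thesis unfolding pi_def ut_def q_def using tau by (simp add: field_simps)
qed

end



lemma phi_deriv:
  assumes "(f has_real_derivative f') (at t within S)" "f t > 0" "x > 0"
  shows "((\<lambda>t. phi x (f t)) has_real_derivative (1 - x / f t) * f') (at t within S)"
proof -
  have d1: "((\<lambda>t. x / f t) has_real_derivative ((0 * f t - x * f') / (f t * f t))) (at t within S)"
    by (rule DERIV_divide[OF DERIV_const assms(1)]) (use assms in auto)
  have d2: "((\<lambda>t. ln (x / f t)) has_real_derivative (1 / (x / f t)) * ((0 * f t - x * f') / (f t * f t))) (at t within S)"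
    by (rule DERIV_chain2[OF DERIV_ln_divide d1]) (use assms in auto)
  have d3: "((\<lambda>t. x * ln (x / f t) - x + f t) has_real_derivative
      x * ((1 / (x / f t)) * ((0 * f t - x * f') / (f t * f t))) - 0 + f') (at t within S)"
    by (intro DERIV_add DERIV_diff DERIV_cmult d2 DERIV_const assms(1))
  show ?thesis unfolding phi_def
    by (rule DERIV_cong[OF d3]) (use assms in \<open>simp add: field_simps\<close>)
qed

lemma sq_deriv:
  assumes "(f has_real_derivative f') (at t within S)"
  shows "((\<lambda>t. (f t - k)\<^sup>2) has_real_derivative 2 * (f t - k) * f') (at t within S)"
proof -
  have "((\<lambda>t. (f t - k) * (f t - k)) has_real_derivative (f' - 0) * (f t - k) + (f' - 0) * (f t - k)) (at t within S)"
    by (intro DERIV_mult DERIV_diff assms DERIV_const)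
  hence "((\<lambda>t. (f t - k) * (f t - k)) has_real_derivative 2 * (f t - k) * f') (at t within S)"
    by (rule DERIV_cong) (simp add: algebra_simps)
  thus ?thesis by (simp add: power2_eq_square)
qed

context mdp begin

definition ut where "ut t s = utilde (U t) s"
definition pit where "pit t s a = U t s a / ut t s"
definition uts where "uts s = utilde us s"
definition pis where "pis s a = us s a / uts s"
definition e where "e t s = V t s - vs s"
definition z where "z t s' = 1 / \<alpha> * (\<Sum>s\<in>UNIV. \<Sum>a\<in>UNIV. K a s s' * (U t s a - us s a))"
definition Gt where "Gt t s b = ln (pit t s b) - 1 / \<tau> * (r s b - (\<Sum>s'\<in>UNIV. K b s s' * V t s'))"
definition kc where "kc = c / (1 - c)"
definition Ud where "Ud t s a = u_rhs c \<gamma> \<tau> P r (V t) (U t) s a"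
definition Vd where "Vd t s = v_rhs \<alpha> \<gamma> P (V t) (U t) s"

definition Lyap where
  "Lyap t = \<alpha> / 2 * (\<Sum>s\<in>UNIV. (V t s - vs s)\<^sup>2)
     + \<tau> * ((\<Sum>s\<in>UNIV. \<Sum>a\<in>UNIV. phi (us s a) (U t s a)) + kc * (\<Sum>s\<in>UNIV. phi (uts s) (ut t s)))"

definition LD where
  "LD t = \<alpha> / 2 * (\<Sum>s\<in>UNIV. 2 * (V t s - vs s) * Vd t s)
     + \<tau> * ((\<Sum>s\<in>UNIV. \<Sum>a\<in>UNIV. (1 - us s a / U t s a) * Ud t s a)
            + kc * (\<Sum>s\<in>UNIV. (1 - uts s / ut t s) * (\<Sum>a\<in>UNIV. Ud t s a)))"

lemma Upos: "t \<ge> 0 \<Longrightarrow> U t s a > 0" using U_pos unfolding pos_u_def by auto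

lemma ut_pos: "t \<ge> 0 \<Longrightarrow> ut t s > 0"
  unfolding ut_def utilde_def using Upos by (intro sum_pos) auto

lemma uts_pos': "uts s > 0" unfolding uts_def by (rule uts_pos)

lemma ut_deriv: "t \<ge> 0 \<Longrightarrow> ((\<lambda>t. ut t s) has_real_derivative (\<Sum>a\<in>UNIV. Ud t s a)) (at t within {0..})"
  unfolding ut_def utilde_def Ud_def by (intro DERIV_sum U_ode)

lemma Lyap_deriv: assumes "t \<ge> 0" shows "(Lyap has_real_derivative LD t) (at t within {0..})"
proof -
  have "((\<lambda>t. Lyap t) has_real_derivative LD t) (at t within {0..})"
    unfolding Lyap_def LD_def
    by (intro DERIV_add DERIV_cmult DERIV_sum sq_deriv phi_deriv ut_deriv assms
        U_ode[OF assms, folded Ud_def] V_ode[OF assms, folded Vd_def] Upos ut_pos us_pos uts_pos')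
  thus ?thesis by simp
qed

end


context mdp begin

lemma Ud_eq: assumes "t \<ge> 0"
  shows "Ud t s a = -(U t s a * Gt t s a - c * U t s a * (\<Sum>b\<in>UNIV. pit t s b * Gt t s b))"
proof -
  have utp: "ut t s > 0" using ut_pos[OF assms] .
  have "Ud t s a = - ut t s * (\<Sum>b\<in>UNIV. ((if a = b then pit t s a else 0) - c * pit t s a * pit t s b) * Gt t s b)"
    unfolding Ud_def u_rhs_def Let_def pit_def Gt_def ut_def ..
  also have "(\<Sum>b\<in>UNIV. ((if a = b then pit t s a else 0) - c * pit t s a * pit t s b) * Gt t s b)
      = pit t s a * Gt t s a - c * pit t s a * (\<Sum>b\<in>UNIV. pit t s b * Gt t s b)"
  proof -
    have "((if a = b then pit t s a else 0) - c * pit t s a * pit t s b) * Gt t s b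
        = (if b = a then pit t s a * Gt t s a else 0) - c * pit t s a * (pit t s b * Gt t s b)" for b
      by (auto simp: algebra_simps)
    thus ?thesis by (simp add: sum_subtractf sum_distrib_left)
  qed
  also have "- ut t s * (pit t s a * Gt t s a - c * pit t s a * (\<Sum>b\<in>UNIV. pit t s b * Gt t s b))
     = -((ut t s * pit t s a) * Gt t s a - c * (ut t s * pit t s a) * (\<Sum>b\<in>UNIV. pit t s b * Gt t s b))"
    by (simp add: algebra_simps)
  also have "ut t s * pit t s a = U t s a" unfolding pit_def using utp by simp
  finally show ?thesis .
qed

lemma Vd_eq: "Vd t s' = - e t s' + z t s'"
proof -
  have "z t s' = 1 / \<alpha> * (\<Sum>s\<in>UNIV. \<Sum>a\<in>UNIV. K a s s' * U t s a) - 1 / \<alpha> * (\<Sum>s\<in>UNIV. \<Sum>a\<in>UNIV. K a s s' * us s a)"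
    unfolding z_def by (simp add: algebra_simps sum_subtractf)
  also have "1 / \<alpha> * (\<Sum>s\<in>UNIV. \<Sum>a\<in>UNIV. K a s s' * us s a) = vs s'"
    using foc_v[of s'] alpha by (simp add: field_simps)
  finally show ?thesis unfolding Vd_def v_rhs_def e_def by simp
qed

lemma Gt_eq: "Gt t s b = ln (pit t s b) - ln (pis s b) + 1 / \<tau> * (\<Sum>s'\<in>UNIV. K b s s' * e t s')"
proof -
  have "r s b - (\<Sum>s'\<in>UNIV. K b s s' * V t s') = (r s b - (\<Sum>s'\<in>UNIV. K b s s' * vs s')) - (\<Sum>s'\<in>UNIV. K b s s' * e t s')"
    unfolding e_def by (simp add: algebra_simps sum_subtractf)
  also have "r s b - (\<Sum>s'\<in>UNIV. K b s s' * vs s') = \<tau> * ln (pis s b)"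
    using foc_u[of s b] unfolding pis_def uts_def by simp
  finally show ?thesis unfolding Gt_def using tau by (simp add: field_simps)
qed

lemma row_identity: assumes "t \<ge> 0"
  shows "(\<Sum>a\<in>UNIV. (1 - us s a / U t s a) * Ud t s a) + kc * ((1 - uts s / ut t s) * (\<Sum>a\<in>UNIV. Ud t s a))
       = - (\<Sum>a\<in>UNIV. (U t s a - us s a) * Gt t s a)"
proof -
  define S where "S = (\<Sum>b\<in>UNIV. pit t s b * Gt t s b)"
  have utp: "ut t s > 0" using ut_pos[OF assms] .
  have UG: "(\<Sum>a\<in>UNIV. U t s a * Gt t s a) = ut t s * S"
    unfolding S_def pit_def sum_distrib_left using utp by (intro sum.cong) auto
  have usum: "(\<Sum>a\<in>UNIV. U t s a) = ut t s" unfolding ut_def utilde_def ..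
  have ussum: "(\<Sum>a\<in>UNIV. us s a) = uts s" unfolding uts_def utilde_def ..
  have Ud': "Ud t s a = -(U t s a * Gt t s a - c * U t s a * S)" for a
    unfolding S_def by (rule Ud_eq[OF assms])
  have sumUd: "(\<Sum>a\<in>UNIV. Ud t s a) = - (1 - c) * ut t s * S"
    unfolding Ud' using UG usum
    by (simp add: sum_subtractf sum_negf sum_distrib_left[symmetric] sum_distrib_right[symmetric] algebra_simps)
  have t1: "(1 - us s a / U t s a) * Ud t s a = - ((U t s a - us s a) * Gt t s a) + c * S * (U t s a - us s a)" for a
    unfolding Ud' using Upos[OF assms, of s a] by (simp add: field_simps)
  have "(\<Sum>a\<in>UNIV. (1 - us s a / U t s a) * Ud t s a)
      = - (\<Sum>a\<in>UNIV. (U t s a - us s a) * Gt t s a) + c * S * (ut t s - uts s)"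
    unfolding t1 using usum ussum by (simp add: sum.distrib sum_negf sum_distrib_left[symmetric] sum_subtractf)
  moreover have "kc * ((1 - uts s / ut t s) * (\<Sum>a\<in>UNIV. Ud t s a)) = - c * S * (ut t s - uts s)"
    unfolding sumUd kc_def using utp c by (simp add: field_simps)
  ultimately show ?thesis by simp
qed

definition Dis where
  "Dis t = (\<Sum>s\<in>UNIV. \<Sum>a\<in>UNIV. (U t s a - us s a) * (ln (pit t s a) - ln (pis s a)))"

lemma LD_eq: assumes "t \<ge> 0"
  shows "LD t = - \<alpha> * (\<Sum>s\<in>UNIV. (e t s)\<^sup>2) - \<tau> * Dis t"
proof -
  define X where "X = (\<Sum>s\<in>UNIV. \<Sum>a\<in>UNIV. (U t s a - us s a) * (\<Sum>s'\<in>UNIV. K a s s' * e t s'))"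
  have vpart: "\<alpha> / 2 * (\<Sum>s\<in>UNIV. 2 * (V t s - vs s) * Vd t s) = - \<alpha> * (\<Sum>s\<in>UNIV. (e t s)\<^sup>2) + X"
  proof -
    have "\<alpha> / 2 * (\<Sum>s\<in>UNIV. 2 * (V t s - vs s) * Vd t s) = \<alpha> * (\<Sum>s\<in>UNIV. e t s * (- e t s + z t s))"
      unfolding Vd_eq e_def by (simp add: sum_distrib_left algebra_simps)
    also have "\<dots> = - \<alpha> * (\<Sum>s\<in>UNIV. (e t s)\<^sup>2) + (\<Sum>s'\<in>UNIV. e t s' * (\<alpha> * z t s'))"
    proof -
      have "e t s * (- e t s + z t s) = e t s * z t s - (e t s)\<^sup>2" for s by (simp add: algebra_simps power2_eq_square)
      hence h1: "(\<Sum>s\<in>UNIV. e t s * (- e t s + z t s)) = (\<Sum>s\<in>UNIV. e t s * z t s) - (\<Sum>s\<in>UNIV. (e t s)\<^sup>2)"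
        by (simp only: sum_subtractf)
      have h2: "\<alpha> * (\<Sum>s\<in>UNIV. e t s * z t s) = (\<Sum>s'\<in>UNIV. e t s' * (\<alpha> * z t s'))"
        by (simp add: sum_distrib_left mult_ac)
      show ?thesis unfolding h1 right_diff_distrib h2 by simp
    qed
    also have "(\<Sum>s'\<in>UNIV. e t s' * (\<alpha> * z t s')) = X"
    proof -
      have "(\<Sum>s'\<in>UNIV. e t s' * (\<alpha> * z t s')) = (\<Sum>s'\<in>UNIV. \<Sum>s\<in>UNIV. \<Sum>a\<in>UNIV. e t s' * K a s s' * (U t s a - us s a))"
        unfolding z_def using alpha by (simp add: sum_distrib_left mult.assoc)
      also have "\<dots> = (\<Sum>s\<in>UNIV. \<Sum>s'\<in>UNIV. \<Sum>a\<in>UNIV. e t s' * K a s s' * (U t s a - us s a))"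
        by (rule sum.swap)
      also have "\<dots> = (\<Sum>s\<in>UNIV. \<Sum>a\<in>UNIV. \<Sum>s'\<in>UNIV. e t s' * K a s s' * (U t s a - us s a))"
        by (intro sum.cong refl sum.swap)
      also have "\<dots> = X" unfolding X_def
        by (intro sum.cong refl) (simp add: sum_distrib_left algebra_simps)
      finally show ?thesis .
    qed
    finally show ?thesis .
  qed
  have upart: "(\<Sum>s\<in>UNIV. \<Sum>a\<in>UNIV. (1 - us s a / U t s a) * Ud t s a)
            + kc * (\<Sum>s\<in>UNIV. (1 - uts s / ut t s) * (\<Sum>a\<in>UNIV. Ud t s a))
      = - (\<Sum>s\<in>UNIV. \<Sum>a\<in>UNIV. (U t s a - us s a) * Gt t s a)"
  proof -
    have "(\<Sum>s\<in>UNIV. \<Sum>a\<in>UNIV. (1 - us s a / U t s a) * Ud t s a)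
            + kc * (\<Sum>s\<in>UNIV. (1 - uts s / ut t s) * (\<Sum>a\<in>UNIV. Ud t s a))
        = (\<Sum>s\<in>UNIV. (\<Sum>a\<in>UNIV. (1 - us s a / U t s a) * Ud t s a) + kc * ((1 - uts s / ut t s) * (\<Sum>a\<in>UNIV. Ud t s a)))"
      by (simp only: sum.distrib sum_distrib_left)
    also have "\<dots> = (\<Sum>s\<in>UNIV. - (\<Sum>a\<in>UNIV. (U t s a - us s a) * Gt t s a))"
      by (intro sum.cong refl row_identity[OF assms])
    finally show ?thesis by (simp only: sum_negf)
  qed
  have "(\<Sum>s\<in>UNIV. \<Sum>a\<in>UNIV. (U t s a - us s a) * Gt t s a) = Dis t + 1 / \<tau> * X"
  proof -
    have pt: "(U t s a - us s a) * (ln (pit t s a) - ln (pis s a) + 1 / \<tau> * (\<Sum>s'\<in>UNIV. K a s s' * e t s'))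
      = (U t s a - us s a) * (ln (pit t s a) - ln (pis s a)) + 1 / \<tau> * ((U t s a - us s a) * (\<Sum>s'\<in>UNIV. K a s s' * e t s'))" for s a
      by (simp add: algebra_simps diff_divide_distrib)
    show ?thesis unfolding Gt_eq Dis_def X_def pt by (simp only: sum.distrib sum_distrib_left)
  qed
  hence "\<tau> * (\<Sum>s\<in>UNIV. \<Sum>a\<in>UNIV. (U t s a - us s a) * Gt t s a) = \<tau> * Dis t + X"
    using tau by (simp add: algebra_simps)
  thus ?thesis unfolding LD_def vpart upart by simp
qed

end



lemma ln_le_half: assumes "0 < (x::real)" shows "ln x \<le> x / 2"
proof -
  have "ln (sqrt x) = ln x / 2" using assms by (simp add: ln_sqrt)
  moreover have "ln (sqrt x) \<le> sqrt x - 1" using assms by (intro ln_le_minus_one) simp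
  moreover have "x = (sqrt x)^2" using assms by simp
  moreover have "0 \<le> (sqrt x - 2)^2" by simp
  ultimately show ?thesis by (simp add: power2_eq_square algebra_simps)
qed

context mdp begin

lemma pit_sum: "t \<ge> 0 \<Longrightarrow> (\<Sum>a\<in>UNIV. pit t s a) = 1"
  unfolding pit_def using ut_pos[of t s] by (simp add: sum_divide_distrib[symmetric] ut_def utilde_def)

lemma pis_sum: "(\<Sum>a\<in>UNIV. pis s a) = 1"
  unfolding pis_def using uts_pos'[of s] by (simp add: sum_divide_distrib[symmetric] uts_def utilde_def)

lemma pit_pos: "t \<ge> 0 \<Longrightarrow> pit t s a > 0" unfolding pit_def using ut_pos Upos by simp
lemma pis_pos: "pis s a > 0" unfolding pis_def using uts_pos' us_pos by simp

lemma pit_le1: "t \<ge> 0 \<Longrightarrow> pit t s a \<le> 1"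
proof -
  assume t: "t \<ge> 0"
  have "pit t s a \<le> (\<Sum>b\<in>UNIV. pit t s b)" by (rule member_le_sum) (use pit_pos[OF t] in \<open>auto intro: less_imp_le\<close>)
  thus ?thesis using pit_sum[OF t] by simp
qed

lemma pis_le1: "pis s a \<le> 1"
proof -
  have "pis s a \<le> (\<Sum>b\<in>UNIV. pis s b)" by (rule member_le_sum) (use pis_pos in \<open>auto intro: less_imp_le\<close>)
  thus ?thesis using pis_sum by simp
qed

lemma phi_sum_eq: assumes "\<And>a. x a > 0" "\<And>a. y a > 0" "(\<Sum>a\<in>UNIV. x a) = 1" "(\<Sum>a\<in>UNIV. y a) = (1::real)"
  shows "(\<Sum>a\<in>(UNIV::'a set). phi (x a) (y a)) = (\<Sum>a\<in>UNIV. x a * (ln (x a) - ln (y a)))"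
proof -
  have "phi (x a) (y a) = x a * (ln (x a) - ln (y a)) - x a + y a" for a
    unfolding phi_def using assms(1,2)[of a] by (simp add: ln_div)
  thus ?thesis using assms(3,4) by (simp add: sum.distrib sum_subtractf)
qed

lemma Dis_row: assumes "t \<ge> 0"
  shows "(\<Sum>a\<in>UNIV. (U t s a - us s a) * (ln (pit t s a) - ln (pis s a)))
     = ut t s * (\<Sum>a\<in>UNIV. phi (pit t s a) (pis s a)) + uts s * (\<Sum>a\<in>UNIV. phi (pis s a) (pit t s a))"
proof -
  have 1: "(\<Sum>a\<in>UNIV. phi (pit t s a) (pis s a)) = (\<Sum>a\<in>UNIV. pit t s a * (ln (pit t s a) - ln (pis s a)))"
    by (rule phi_sum_eq) (use pit_pos[OF assms] pis_pos pit_sum[OF assms] pis_sum in auto)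
  have 2: "(\<Sum>a\<in>UNIV. phi (pis s a) (pit t s a)) = (\<Sum>a\<in>UNIV. pis s a * (ln (pis s a) - ln (pit t s a)))"
    by (rule phi_sum_eq) (use pit_pos[OF assms] pis_pos pit_sum[OF assms] pis_sum in auto)
  have U: "U t s a = ut t s * pit t s a" for a unfolding pit_def using ut_pos[OF assms, of s] by simp
  have us: "us s a = uts s * pis s a" for a unfolding pis_def using uts_pos'[of s] by simp
  show ?thesis unfolding 1 2 sum_distrib_left
    by (subst sum.distrib[symmetric], intro sum.cong refl) (simp add: U us algebra_simps)
qed

lemma Dis_ge: assumes "t \<ge> 0"
  shows "Dis t \<ge> (\<Sum>s\<in>UNIV. uts s * (\<Sum>a\<in>UNIV. phi (pis s a) (pit t s a)))"
  unfolding Dis_def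
proof (rule sum_mono)
  fix s :: 's
  have "0 \<le> ut t s * (\<Sum>a\<in>UNIV. phi (pit t s a) (pis s a))"
    using ut_pos[OF assms, of s] pit_pos[OF assms] pis_pos
    by (intro mult_nonneg_nonneg sum_nonneg phi_nonneg) (auto intro: less_imp_le)
  thus "uts s * (\<Sum>a\<in>UNIV. phi (pis s a) (pit t s a)) \<le> (\<Sum>a\<in>UNIV. (U t s a - us s a) * (ln (pit t s a) - ln (pis s a)))"
    unfolding Dis_row[OF assms] by simp
qed

lemma Dis_nonneg: assumes "t \<ge> 0" shows "Dis t \<ge> 0"
proof -
  have "0 \<le> (\<Sum>s\<in>UNIV. uts s * (\<Sum>a\<in>UNIV. phi (pis s a) (pit t s a)))"
    using uts_pos' pit_pos[OF assms] pis_pos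
    by (intro sum_nonneg mult_nonneg_nonneg phi_nonneg) (auto intro: less_imp_le)
  thus ?thesis using Dis_ge[OF assms] by linarith
qed

lemma LD_nonpos: assumes "t \<ge> 0" shows "LD t \<le> 0"
proof -
  have "0 \<le> \<alpha> * (\<Sum>s\<in>UNIV. (e t s)\<^sup>2)" using alpha by (simp add: sum_nonneg)
  moreover have "0 \<le> \<tau> * Dis t" using Dis_nonneg[OF assms] tau by simp
  ultimately show ?thesis using LD_eq[OF assms] by linarith
qed

lemma Lyap_mono: "t \<ge> 0 \<Longrightarrow> Lyap t \<le> Lyap 0"
  by (rule mono_from_deriv[OF Lyap_deriv LD_nonpos])

lemma kc_pos: "kc > 0" unfolding kc_def using c by simp

lemma Lyap_ge_phi: assumes "t \<ge> 0" shows "\<tau> * phi (us s a) (U t s a) \<le> Lyap t"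
proof -
  have A: "0 \<le> \<alpha> / 2 * (\<Sum>s\<in>UNIV. (V t s - vs s)\<^sup>2)" using alpha by (simp add: sum_nonneg)
  have B: "0 \<le> kc * (\<Sum>s\<in>UNIV. phi (uts s) (ut t s))"
    using kc_pos uts_pos' ut_pos[OF assms] by (intro mult_nonneg_nonneg sum_nonneg phi_nonneg) (auto intro: less_imp_le)
  have "phi (us s a) (U t s a) \<le> (\<Sum>a\<in>UNIV. phi (us s a) (U t s a))"
    by (rule member_le_sum) (use us_pos Upos[OF assms] phi_nonneg in auto)
  also have "\<dots> \<le> (\<Sum>s\<in>UNIV. \<Sum>a\<in>UNIV. phi (us s a) (U t s a))"
    by (rule member_le_sum[of _ UNIV "\<lambda>s. \<Sum>a\<in>UNIV. phi (us s a) (U t s a)"])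
       (use us_pos Upos[OF assms] phi_nonneg in \<open>auto intro: sum_nonneg\<close>)
  finally show ?thesis unfolding Lyap_def using A B tau by (simp add: mult_left_mono add_increasing)
qed

definition Bb where "Bb = Lyap 0 / \<tau>"
definition Mb where "Mb = 2 * (Bb + Max (range (\<lambda>(s, a). us s a)))"
definition mb where "mb = Min (range (\<lambda>(s, a). us s a * exp (- (Bb + us s a) / us s a)))"

lemma Bb_nonneg: "Bb \<ge> 0"
proof -
  have "0 \<le> phi (us undefined undefined) (U 0 undefined undefined)"
    using us_pos Upos[of 0] by (intro phi_nonneg) auto
  hence "0 \<le> Lyap 0" using Lyap_ge_phi[of 0 undefined undefined] tau
    by (smt (verit) mult_nonneg_nonneg)
  thus ?thesis unfolding Bb_def using tau by simp
qed

lemma phi_le_Bb: "t \<ge> 0 \<Longrightarrow> phi (us s a) (U t s a) \<le> Bb"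
  using Lyap_ge_phi[of t s a] Lyap_mono[of t] tau unfolding Bb_def by (simp add: field_simps)

lemma us_le_max: "us s a \<le> Max (range (\<lambda>(s, a). us s a))"
  by (rule Max_ge) (auto intro!: image_eqI[where x="(s,a)"])

lemma mb_pos: "mb > 0"
  unfolding mb_def using us_pos by (subst Min_gr_iff) auto

lemma mb_le: "mb \<le> us s a * exp (- (Bb + us s a) / us s a)"
  unfolding mb_def by (rule Min_le) (auto intro!: image_eqI[where x="(s,a)"])

lemma U_upper: assumes "t \<ge> 0" shows "U t s a \<le> Mb"
proof -
  let ?x = "us s a" and ?y = "U t s a"
  have xp: "?x > 0" and yp: "?y > 0" using us_pos Upos[OF assms] by auto
  have "ln (?y / ?x) \<le> (?y / ?x) / 2" using xp yp by (intro ln_le_half) simp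
  hence "?x * ln (?y / ?x) \<le> ?x * ((?y / ?x) / 2)" using xp by (intro mult_left_mono) auto
  hence "?x * ln (?y / ?x) \<le> ?y / 2" using xp by simp
  moreover have "ln (?x / ?y) = - ln (?y / ?x)" using xp yp by (simp add: ln_div)
  ultimately have "phi ?x ?y \<ge> ?y / 2 - ?x" unfolding phi_def by simp
  hence "?y \<le> 2 * (Bb + ?x)" using phi_le_Bb[OF assms, of s a] by simp
  thus ?thesis unfolding Mb_def using us_le_max[of s a] by simp
qed

lemma us_le_Mb: "us s a \<le> Mb"
  unfolding Mb_def using us_le_max[of s a] Bb_nonneg us_pos[of s a] by simp

lemma U_lower: assumes "t \<ge> 0" shows "mb \<le> U t s a"
proof -
  let ?x = "us s a" and ?y = "U t s a"
  have xp: "?x > 0" and yp: "?y > 0" using us_pos Upos[OF assms] by auto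
  have "?x * ln (?x / ?y) - ?x \<le> Bb" using phi_le_Bb[OF assms, of s a] yp unfolding phi_def by simp
  hence "ln (?x / ?y) \<le> (Bb + ?x) / ?x" using xp by (simp add: field_simps)
  moreover have "?x / ?y = exp (ln (?x / ?y))" using xp yp by simp
  ultimately have "?x / ?y \<le> exp ((Bb + ?x) / ?x)" by (metis exp_le_cancel_iff)
  hence "?x \<le> ?y * exp ((Bb + ?x) / ?x)" using xp yp by (simp add: field_simps)
  hence "?x / exp ((Bb + ?x) / ?x) \<le> ?y" by (simp add: divide_le_eq)
  moreover have "?x * exp (- (Bb + ?x) / ?x) = ?x / exp ((Bb + ?x) / ?x)"
  proof -
    have "- (Bb + ?x) / ?x = - ((Bb + ?x) / ?x)" by (simp add: minus_divide_left)
    thus ?thesis by (simp add: exp_minus divide_inverse)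
  qed
  ultimately have "?x * exp (- (Bb + ?x) / ?x) \<le> ?y" by simp
  thus ?thesis using mb_le[of s a] by simp
qed

lemma mb_le_us: "mb \<le> us s a"
proof -
  have "- (Bb + us s a) / us s a \<le> 0" using Bb_nonneg us_pos[of s a] by (intro divide_nonpos_pos) auto
  hence "exp (- (Bb + us s a) / us s a) \<le> 1" by simp
  hence "us s a * exp (- (Bb + us s a) / us s a) \<le> us s a" using us_pos[of s a]
    by (simp add: mult_le_cancel_left1)
  thus ?thesis using mb_le[of s a] by simp
qed

lemma Mb_pos: "Mb > 0" using us_le_Mb[of undefined undefined] us_pos[of undefined undefined] by simp

end



lemma dsum_pair: fixes f :: "'s::finite \<Rightarrow> 'a::finite \<Rightarrow> real"
  shows "(\<Sum>s\<in>UNIV. \<Sum>a\<in>UNIV. f s a) = (\<Sum>p\<in>UNIV. f (fst p) (snd p))"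
  by (simp add: sum.cartesian_product case_prod_beta UNIV_Times_UNIV[symmetric] del: UNIV_Times_UNIV)

lemma dsum_l1sq: fixes f :: "'s::finite \<Rightarrow> 'a::finite \<Rightarrow> real"
  shows "(\<Sum>s\<in>UNIV. \<Sum>a\<in>UNIV. \<bar>f s a\<bar>)^2 \<le> real CARD('s) * real CARD('a) * (\<Sum>s\<in>UNIV. \<Sum>a\<in>UNIV. (f s a)^2)"
  using l1sq_le_card_sum_sq[of "\<lambda>p. f (fst p) (snd p)" "UNIV :: ('s \<times> 'a) set"]
  unfolding dsum_pair[of "\<lambda>s a. \<bar>f s a\<bar>"] dsum_pair[of "\<lambda>s a. (f s a)^2"]
  by (simp add: card_cartesian_product UNIV_Times_UNIV[symmetric] del: UNIV_Times_UNIV)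

lemma dsum_sq_le: fixes f :: "'s::finite \<Rightarrow> 'a::finite \<Rightarrow> real"
  shows "(\<Sum>s\<in>UNIV. \<Sum>a\<in>UNIV. (f s a)^2) \<le> (\<Sum>s\<in>UNIV. \<Sum>a\<in>UNIV. \<bar>f s a\<bar>)^2"
  using sum_sq_le_l1sq[of "UNIV :: ('s \<times> 'a) set" "\<lambda>p. f (fst p) (snd p)"]
  unfolding dsum_pair[of "\<lambda>s a. \<bar>f s a\<bar>"] dsum_pair[of "\<lambda>s a. (f s a)^2"] by simp

lemma ssum_l1sq: fixes f :: "'s::finite \<Rightarrow> real"
  shows "(\<Sum>s\<in>UNIV. \<bar>f s\<bar>)^2 \<le> real CARD('s) * (\<Sum>s\<in>UNIV. (f s)^2)"
  using l1sq_le_card_sum_sq[of f UNIV] by simp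

lemma ssum_sq_le: fixes f :: "'s::finite \<Rightarrow> real"
  shows "(\<Sum>s\<in>UNIV. (f s)^2) \<le> (\<Sum>s\<in>UNIV. \<bar>f s\<bar>)^2"
  using sum_sq_le_l1sq[of UNIV f] by simp

lemma dmember: fixes f :: "'s::finite \<Rightarrow> 'a::finite \<Rightarrow> real"
  shows "\<bar>f s a\<bar> \<le> (\<Sum>s\<in>UNIV. \<Sum>a\<in>UNIV. \<bar>f s a\<bar>)"
proof -
  have "\<bar>f s a\<bar> \<le> (\<Sum>a\<in>UNIV. \<bar>f s a\<bar>)" by (rule member_le_sum) auto
  also have "\<dots> \<le> (\<Sum>s\<in>UNIV. \<Sum>a\<in>UNIV. \<bar>f s a\<bar>)"
    by (rule member_le_sum[of _ UNIV "\<lambda>s. \<Sum>a\<in>UNIV. \<bar>f s a\<bar>"]) (auto intro: sum_nonneg)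
  finally show ?thesis .
qed

lemma smember: fixes f :: "'s::finite \<Rightarrow> real"
  shows "\<bar>f s\<bar> \<le> (\<Sum>s\<in>UNIV. \<bar>f s\<bar>)"
  by (rule member_le_sum) auto

lemma sq_add_le: "((x::real) + y)^2 \<le> 2 * (x^2 + y^2)"
proof -
  have "0 \<le> (x - y)^2" by simp
  thus ?thesis by (simp add: power2_eq_square algebra_simps)
qed

lemma prod_le_half: "(x::real) * y \<le> (x^2 + y^2) / 2"
proof -
  have "0 \<le> (x - y)^2" by simp
  thus ?thesis by (simp add: power2_eq_square algebra_simps)
qed

context mdp begin

definition "nS = real CARD('s)"
definition "nA = real CARD('a)"
definition "E2 t = (\<Sum>s\<in>UNIV. (e t s)^2)"
definition "Z2 t = (\<Sum>s\<in>UNIV. (z t s)^2)"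
definition "U2 t = (\<Sum>s\<in>UNIV. \<Sum>a\<in>UNIV. (U t s a - us s a)^2)"
definition "D2 t = (\<Sum>s\<in>UNIV. \<Sum>a\<in>UNIV. (pit t s a - pis s a)^2)"
definition "e1 t = (\<Sum>s\<in>UNIV. \<bar>e t s\<bar>)"
definition "z1 t = (\<Sum>s\<in>UNIV. \<bar>z t s\<bar>)"
definition "w1 t = (\<Sum>s\<in>UNIV. \<Sum>a\<in>UNIV. \<bar>U t s a - us s a\<bar>)"
definition "d1 t = (\<Sum>s\<in>UNIV. \<Sum>a\<in>UNIV. \<bar>pit t s a - pis s a\<bar>)"
definition "p1 = mb / (nA * Mb)"

lemma nS_ge1: "nS \<ge> 1" unfolding nS_def by (simp add: Suc_leI)
lemma nA_ge1: "nA \<ge> 1" unfolding nA_def by (simp add: Suc_leI)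

lemma e1_sq: "(e1 t)^2 \<le> nS * E2 t" unfolding e1_def E2_def nS_def by (rule ssum_l1sq)
lemma z1_sq: "(z1 t)^2 \<le> nS * Z2 t" unfolding z1_def Z2_def nS_def by (rule ssum_l1sq)
lemma Z2_le: "Z2 t \<le> (z1 t)^2" unfolding z1_def Z2_def by (rule ssum_sq_le)
lemma w1_sq: "(w1 t)^2 \<le> nS * nA * U2 t" unfolding w1_def U2_def nS_def nA_def by (rule dsum_l1sq)
lemma d1_sq: "(d1 t)^2 \<le> nS * nA * D2 t" unfolding d1_def D2_def nS_def nA_def by (rule dsum_l1sq)
lemma U2_le: "U2 t \<le> (w1 t)^2" unfolding w1_def U2_def by (rule dsum_sq_le)
lemma e1_nonneg: "e1 t \<ge> 0" unfolding e1_def by simp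
lemma d1_nonneg: "d1 t \<ge> 0" unfolding d1_def by (simp add: sum_nonneg)
lemma z1_nonneg: "z1 t \<ge> 0" unfolding z1_def by simp
lemma w1_nonneg: "w1 t \<ge> 0" unfolding w1_def by (simp add: sum_nonneg)
lemma E2_nonneg: "E2 t \<ge> 0" unfolding E2_def by (simp add: sum_nonneg)
lemma Z2_nonneg: "Z2 t \<ge> 0" unfolding Z2_def by (simp add: sum_nonneg)
lemma U2_nonneg: "U2 t \<ge> 0" unfolding U2_def by (simp add: sum_nonneg)
lemma D2_nonneg: "D2 t \<ge> 0" unfolding D2_def by (simp add: sum_nonneg)

lemma ut_le: assumes "t \<ge> 0" shows "ut t s \<le> nA * Mb"
proof -
  have "ut t s \<le> (\<Sum>a\<in>(UNIV::'a set). Mb)" unfolding ut_def utilde_def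
    by (rule sum_mono) (rule U_upper[OF assms])
  thus ?thesis unfolding nA_def by simp
qed

lemma uts_le: "uts s \<le> nA * Mb"
proof -
  have "uts s \<le> (\<Sum>a\<in>(UNIV::'a set). Mb)" unfolding uts_def utilde_def
    by (rule sum_mono) (rule us_le_Mb)
  thus ?thesis unfolding nA_def by simp
qed

lemma ut_ge: assumes "t \<ge> 0" shows "mb \<le> ut t s"
proof -
  have "U t s undefined \<le> ut t s" unfolding ut_def utilde_def
    by (rule member_le_sum) (use Upos[OF assms] in \<open>auto intro: less_imp_le\<close>)
  thus ?thesis using U_lower[OF assms, of s undefined] by simp
qed

lemma uts_ge: "mb \<le> uts s"
proof -
  have "us s undefined \<le> uts s" unfolding uts_def utilde_def
    by (rule member_le_sum) (use us_pos in \<open>auto intro: less_imp_le\<close>)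
  thus ?thesis using mb_le_us[of s undefined] by simp
qed

lemma p1_pos: "p1 > 0" unfolding p1_def using mb_pos Mb_pos nA_ge1 by simp

lemma pit_ge: assumes "t \<ge> 0" shows "p1 \<le> pit t s a"
  unfolding p1_def pit_def using U_lower[OF assms, of s a] ut_le[OF assms, of s] ut_pos[OF assms, of s] mb_pos
  by (intro frac_le) auto

lemma pis_ge: "p1 \<le> pis s a"
  unfolding p1_def pis_def using mb_le_us[of s a] uts_le[of s] uts_pos'[of s] mb_pos
  by (intro frac_le) auto

end


context mdp begin

definition "gb t = d1 t / p1 + e1 t / \<tau>"

lemma Ke_bound: "\<bar>\<Sum>s'\<in>UNIV. K b s s' * e t s'\<bar> \<le> e1 t"
proof -
  have "\<bar>\<Sum>s'\<in>UNIV. K b s s' * e t s'\<bar> \<le> (\<Sum>s'\<in>UNIV. \<bar>K b s s' * e t s'\<bar>)" by (rule sum_abs)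
  also have "\<dots> \<le> (\<Sum>s'\<in>UNIV. \<bar>e t s'\<bar>)"
    by (rule sum_mono) (simp add: abs_mult mult_left_le_one_le K_abs)
  finally show ?thesis unfolding e1_def .
qed

lemma Gt_bound: assumes "t \<ge> 0" shows "\<bar>Gt t s b\<bar> \<le> gb t"
proof -
  have "\<bar>ln (pit t s b) - ln (pis s b)\<bar> \<le> \<bar>pit t s b - pis s b\<bar> / p1"
    by (rule ln_lipschitz[OF p1_pos pit_ge[OF assms] pis_ge])
  also have "\<dots> \<le> d1 t / p1" unfolding d1_def using p1_pos
    by (intro divide_right_mono dmember[of "\<lambda>s a. pit t s a - pis s a"]) auto
  finally have 1: "\<bar>ln (pit t s b) - ln (pis s b)\<bar> \<le> d1 t / p1" .
  have 2: "\<bar>1 / \<tau> * (\<Sum>s'\<in>UNIV. K b s s' * e t s')\<bar> \<le> e1 t / \<tau>"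
    using Ke_bound[of b s t] tau by (simp add: abs_mult divide_right_mono)
  show ?thesis unfolding Gt_eq gb_def using 1 2 by linarith
qed

lemma gb_nonneg: "gb t \<ge> 0" unfolding gb_def using d1_nonneg e1_nonneg p1_pos tau by simp

lemma Ud_bound: assumes "t \<ge> 0" shows "\<bar>Ud t s a\<bar> \<le> 2 * Mb * gb t"
proof -
  define S where "S = (\<Sum>b\<in>UNIV. pit t s b * Gt t s b)"
  have "\<bar>S\<bar> \<le> (\<Sum>b\<in>UNIV. \<bar>pit t s b * Gt t s b\<bar>)" unfolding S_def by (rule sum_abs)
  also have "\<dots> \<le> (\<Sum>b\<in>UNIV. pit t s b * gb t)"
    using pit_pos[OF assms] Gt_bound[OF assms]
    by (intro sum_mono) (simp add: abs_mult less_imp_le mult_left_mono)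
  also have "\<dots> = gb t" using pit_sum[OF assms] by (simp add: sum_distrib_right[symmetric])
  finally have S: "\<bar>S\<bar> \<le> gb t" .
  have Ub: "0 < U t s a" "U t s a \<le> Mb" using Upos[OF assms] U_upper[OF assms] by auto
  have "\<bar>Ud t s a\<bar> \<le> U t s a * \<bar>Gt t s a\<bar> + c * U t s a * \<bar>S\<bar>"
  proof -
    have "\<bar>U t s a * Gt t s a - c * U t s a * S\<bar> \<le> \<bar>U t s a * Gt t s a\<bar> + \<bar>c * U t s a * S\<bar>"
      by (rule abs_triangle_ineq4)
    thus ?thesis unfolding Ud_eq[OF assms] S_def[symmetric] using Ub c by (simp add: abs_mult)
  qed
  also have "\<dots> \<le> Mb * gb t + 1 * Mb * gb t"
    using Ub c S Gt_bound[OF assms, of s a] gb_nonneg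
    by (intro add_mono mult_mono) (auto intro: mult_nonneg_nonneg)
  finally show ?thesis by simp
qed

definition "zd t s' = 1 / \<alpha> * (\<Sum>s\<in>UNIV. \<Sum>a\<in>UNIV. K a s s' * Ud t s a)"

lemma zd_bound: assumes "t \<ge> 0" shows "\<bar>zd t s'\<bar> \<le> nS * nA * 2 * Mb * gb t / \<alpha>"
proof -
  have "\<bar>\<Sum>s\<in>UNIV. \<Sum>a\<in>UNIV. K a s s' * Ud t s a\<bar> \<le> (\<Sum>s\<in>UNIV. \<Sum>a\<in>UNIV. \<bar>K a s s' * Ud t s a\<bar>)"
    by (rule order_trans[OF sum_abs sum_mono]) (rule sum_abs)
  also have "\<dots> \<le> (\<Sum>s\<in>(UNIV::'s set). \<Sum>a\<in>(UNIV::'a set). 2 * Mb * gb t)"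
    using Ud_bound[OF assms] K_abs
    by (intro sum_mono) (simp add: abs_mult, meson abs_ge_zero mult_left_le_one_le order_trans)
  also have "\<dots> = nS * nA * (2 * Mb * gb t)" unfolding nS_def nA_def by simp
  finally show ?thesis unfolding zd_def using alpha by (simp add: abs_mult divide_right_mono field_simps)
qed

definition "C3 = 2 * Mb * nS * nA / \<alpha>"
definition "C4 = (C3 / (2 * p1) + C3 / \<tau>) * nS * nA"

lemma C3_pos: "C3 > 0" unfolding C3_def using Mb_pos nS_ge1 nA_ge1 alpha by simp
lemma C4_pos: "C4 > 0" unfolding C4_def using C3_pos p1_pos tau nS_ge1 nA_ge1
  by (intro mult_pos_pos add_pos_pos divide_pos_pos) auto

lemma zd_bound': assumes "t \<ge> 0" shows "\<bar>zd t s'\<bar> \<le> C3 * gb t"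
proof -
  have "nS * nA * 2 * Mb * gb t / \<alpha> = C3 * gb t" unfolding C3_def by simp
  thus ?thesis using zd_bound[OF assms, of s'] by simp
qed

lemma ezd_bound: assumes "t \<ge> 0" shows "\<bar>\<Sum>s\<in>UNIV. e t s * zd t s\<bar> \<le> C4 * (E2 t + D2 t)"
proof -
  have "\<bar>\<Sum>s\<in>UNIV. e t s * zd t s\<bar> \<le> (\<Sum>s\<in>UNIV. \<bar>e t s\<bar> * (C3 * gb t))"
    by (rule order_trans[OF sum_abs sum_mono]) (simp add: abs_mult mult_left_mono zd_bound'[OF assms])
  also have "\<dots> = C3 * (e1 t * gb t)" unfolding e1_def by (simp add: sum_distrib_right[symmetric] mult_ac)
  finally have A: "\<bar>\<Sum>s\<in>UNIV. e t s * zd t s\<bar> \<le> C3 * (e1 t * gb t)" .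
  have "e1 t * gb t = (e1 t * d1 t) / p1 + (e1 t)^2 / \<tau>"
    unfolding gb_def by (simp add: power2_eq_square algebra_simps)
  also have "\<dots> \<le> ((e1 t)^2 + (d1 t)^2) / 2 / p1 + (e1 t)^2 / \<tau>"
    using p1_pos by (intro add_mono divide_right_mono prod_le_half order_refl) auto
  also have "\<dots> \<le> (nS * E2 t + nS * nA * D2 t) / 2 / p1 + nS * E2 t / \<tau>"
    using e1_sq[of t] d1_sq[of t] p1_pos tau
    by (intro add_mono divide_right_mono) auto
  also have "\<dots> \<le> (nS * nA * E2 t + nS * nA * D2 t) / 2 / p1 + nS * nA * E2 t / \<tau>"
  proof -
    have "nS * E2 t \<le> nS * nA * E2 t" using nA_ge1 nS_ge1 E2_nonneg[of t]
    proof -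
      have "E2 t \<le> nA * E2 t" using nA_ge1 E2_nonneg[of t] by (simp add: mult_le_cancel_right1)
      thus ?thesis using nS_ge1 by (simp add: mult.assoc)
    qed
    thus ?thesis using p1_pos tau by (intro add_mono divide_right_mono) auto
  qed
  finally have h: "e1 t * gb t \<le> (nS * nA * E2 t + nS * nA * D2 t) / 2 / p1 + nS * nA * E2 t / \<tau>" .
  note A
  also have "C3 * (e1 t * gb t) \<le> C3 * ((nS * nA * E2 t + nS * nA * D2 t) / 2 / p1 + nS * nA * E2 t / \<tau>)"
    using C3_pos h by (intro mult_left_mono) auto
  also have "\<dots> \<le> C4 * (E2 t + D2 t)"
  proof -
    have "C3 * ((nS * nA * E2 t + nS * nA * D2 t) / 2 / p1 + nS * nA * E2 t / \<tau>)
       = (C3 / (2 * p1)) * nS * nA * (E2 t + D2 t) + C3 / \<tau> * nS * nA * E2 t"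
      using p1_pos tau by (simp add: field_simps)
    also have "\<dots> \<le> (C3 / (2 * p1)) * nS * nA * (E2 t + D2 t) + C3 / \<tau> * nS * nA * (E2 t + D2 t)"
      using C3_pos tau nS_ge1 nA_ge1 D2_nonneg[of t] by (intro add_left_mono mult_left_mono) auto
    also have "\<dots> = C4 * (E2 t + D2 t)" unfolding C4_def by (simp add: algebra_simps)
    finally show ?thesis .
  qed
  finally show ?thesis .
qed

end


context mdp begin

definition "dl t s = ut t s - uts s"
definition "R t s' = (\<Sum>s\<in>UNIV. \<Sum>a\<in>UNIV. K a s s' * (ut t s * (pit t s a - pis s a)))"
definition "dl1 t = (\<Sum>s\<in>UNIV. \<bar>dl t s\<bar>)"

lemma Udecomp: assumes "t \<ge> 0"
  shows "U t s a - us s a = dl t s * pis s a + ut t s * (pit t s a - pis s a)"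
proof -
  have "U t s a = ut t s * pit t s a" unfolding pit_def using ut_pos[OF assms, of s] by simp
  moreover have "us s a = uts s * pis s a" unfolding pis_def using uts_pos'[of s] by simp
  ultimately show ?thesis unfolding dl_def by (simp add: algebra_simps)
qed

lemma Kpis: "(\<Sum>a\<in>UNIV. K a s s' * pis s a) = (if s = s' then 1 else 0) - \<gamma> * (\<Sum>a\<in>UNIV. P a s s' * pis s a)"
proof -
  have "(\<Sum>a\<in>UNIV. K a s s' * pis s a) = (\<Sum>a\<in>UNIV. (if s = s' then 1 else 0) * pis s a - \<gamma> * (P a s s' * pis s a))"
    unfolding Kmat_def by (intro sum.cong refl) (simp add: algebra_simps)
  also have "\<dots> = (if s = s' then 1 else 0) * (\<Sum>a\<in>UNIV. pis s a) - \<gamma> * (\<Sum>a\<in>UNIV. P a s s' * pis s a)"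
    by (simp add: sum_subtractf sum_distrib_left)
  finally show ?thesis using pis_sum by simp
qed

lemma alpha_z: assumes "t \<ge> 0"
  shows "\<alpha> * z t s' = dl t s' - \<gamma> * (\<Sum>s\<in>UNIV. dl t s * (\<Sum>a\<in>UNIV. P a s s' * pis s a)) + R t s'"
proof -
  have "\<alpha> * z t s' = (\<Sum>s\<in>UNIV. \<Sum>a\<in>UNIV. K a s s' * (U t s a - us s a))"
    unfolding z_def using alpha by simp
  also have "\<dots> = (\<Sum>s\<in>UNIV. \<Sum>a\<in>UNIV. dl t s * (K a s s' * pis s a) + K a s s' * (ut t s * (pit t s a - pis s a)))"
    unfolding Udecomp[OF assms] by (simp add: algebra_simps)
  also have "\<dots> = (\<Sum>s\<in>UNIV. dl t s * (\<Sum>a\<in>UNIV. K a s s' * pis s a)) + R t s'"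
    unfolding R_def by (simp add: sum.distrib sum_distrib_left)
  also have "(\<Sum>s\<in>UNIV. dl t s * (\<Sum>a\<in>UNIV. K a s s' * pis s a))
      = (\<Sum>s\<in>UNIV. (if s = s' then dl t s' else 0) - \<gamma> * (dl t s * (\<Sum>a\<in>UNIV. P a s s' * pis s a)))"
    unfolding Kpis by (intro sum.cong refl) (auto simp: algebra_simps)
  also have "\<dots> = dl t s' - \<gamma> * (\<Sum>s\<in>UNIV. dl t s * (\<Sum>a\<in>UNIV. P a s s' * pis s a))"
    by (simp add: sum_subtractf sum_distrib_left)
  finally show ?thesis .
qed

lemma R_bound: assumes "t \<ge> 0" shows "\<bar>R t s'\<bar> \<le> nA * Mb * d1 t"
proof -
  have "\<bar>R t s'\<bar> \<le> (\<Sum>s\<in>UNIV. \<Sum>a\<in>UNIV. \<bar>K a s s' * (ut t s * (pit t s a - pis s a))\<bar>)"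
    unfolding R_def by (rule order_trans[OF sum_abs sum_mono]) (rule sum_abs)
  also have "\<dots> \<le> (\<Sum>s\<in>UNIV. \<Sum>a\<in>UNIV. nA * Mb * \<bar>pit t s a - pis s a\<bar>)"
  proof (intro sum_mono)
    fix s a
    have "\<bar>K a s s'\<bar> * (ut t s * \<bar>pit t s a - pis s a\<bar>) \<le> 1 * (nA * Mb * \<bar>pit t s a - pis s a\<bar>)"
      using K_abs ut_le[OF assms] ut_pos[OF assms, of s] nA_ge1 Mb_pos
      by (intro mult_mono) (auto intro: mult_right_mono)
    thus "\<bar>K a s s' * (ut t s * (pit t s a - pis s a))\<bar> \<le> nA * Mb * \<bar>pit t s a - pis s a\<bar>"
      using ut_pos[OF assms, of s] by (simp add: abs_mult)
  qed
  also have "\<dots> = nA * Mb * d1 t" unfolding d1_def by (simp add: sum_distrib_left)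
  finally show ?thesis .
qed

lemma Ppis_nonneg: "0 \<le> (\<Sum>a\<in>UNIV. P a s s' * pis s a)"
  using P_nonneg pis_pos by (intro sum_nonneg mult_nonneg_nonneg) (auto intro: less_imp_le)

lemma Ppis_sum: "(\<Sum>s'\<in>UNIV. \<Sum>a\<in>UNIV. P a s s' * pis s a) = 1"
proof -
  have "(\<Sum>s'\<in>UNIV. \<Sum>a\<in>UNIV. P a s s' * pis s a) = (\<Sum>a\<in>UNIV. \<Sum>s'\<in>UNIV. P a s s' * pis s a)"
    by (rule sum.swap)
  also have "\<dots> = (\<Sum>a\<in>UNIV. pis s a)" by (simp add: sum_distrib_right[symmetric] P_stoch)
  finally show ?thesis using pis_sum by simp
qed

lemma dl1_bound: assumes "t \<ge> 0" shows "(1 - \<gamma>) * dl1 t \<le> \<alpha> * z1 t + nS * (nA * Mb * d1 t)"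
proof -
  have pt: "\<bar>dl t s'\<bar> \<le> \<alpha> * \<bar>z t s'\<bar> + nA * Mb * d1 t + \<gamma> * (\<Sum>s\<in>UNIV. \<bar>dl t s\<bar> * (\<Sum>a\<in>UNIV. P a s s' * pis s a))" for s'
  proof -
    have "dl t s' = \<alpha> * z t s' - R t s' + \<gamma> * (\<Sum>s\<in>UNIV. dl t s * (\<Sum>a\<in>UNIV. P a s s' * pis s a))"
      using alpha_z[OF assms, of s'] by simp
    moreover have X: "\<bar>\<Sum>s\<in>UNIV. dl t s * (\<Sum>a\<in>UNIV. P a s s' * pis s a)\<bar> \<le> (\<Sum>s\<in>UNIV. \<bar>dl t s\<bar> * (\<Sum>a\<in>UNIV. P a s s' * pis s a))"
      by (rule order_trans[OF sum_abs]) (simp add: abs_mult Ppis_nonneg)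
    moreover have "\<bar>\<alpha> * z t s'\<bar> = \<alpha> * \<bar>z t s'\<bar>" using alpha by (simp add: abs_mult)
    moreover have "\<bar>\<gamma> * (\<Sum>s\<in>UNIV. dl t s * (\<Sum>a\<in>UNIV. P a s s' * pis s a))\<bar>
        \<le> \<gamma> * (\<Sum>s\<in>UNIV. \<bar>dl t s\<bar> * (\<Sum>a\<in>UNIV. P a s s' * pis s a))"
      using X gamma by (simp add: abs_mult mult_left_mono)
    moreover have "\<bar>a - b + d\<bar> \<le> \<bar>a\<bar> + \<bar>b\<bar> + \<bar>d\<bar>" for a b d :: real by linarith
    ultimately show ?thesis using R_bound[OF assms, of s'] 
      by (smt (verit))
  qed
  have "dl1 t \<le> (\<Sum>s'\<in>UNIV. \<alpha> * \<bar>z t s'\<bar> + nA * Mb * d1 t + \<gamma> * (\<Sum>s\<in>UNIV. \<bar>dl t s\<bar> * (\<Sum>a\<in>UNIV. P a s s' * pis s a)))"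
    unfolding dl1_def by (rule sum_mono) (rule pt)
  also have "\<dots> = \<alpha> * z1 t + nS * (nA * Mb * d1 t) + \<gamma> * (\<Sum>s'\<in>UNIV. \<Sum>s\<in>UNIV. \<bar>dl t s\<bar> * (\<Sum>a\<in>UNIV. P a s s' * pis s a))"
    unfolding z1_def nS_def by (simp add: sum.distrib sum_distrib_left)
  also have "(\<Sum>s'\<in>UNIV. \<Sum>s\<in>UNIV. \<bar>dl t s\<bar> * (\<Sum>a\<in>UNIV. P a s s' * pis s a)) = dl1 t"
  proof -
    have "(\<Sum>s'\<in>UNIV. \<Sum>s\<in>UNIV. \<bar>dl t s\<bar> * (\<Sum>a\<in>UNIV. P a s s' * pis s a))
        = (\<Sum>s\<in>UNIV. \<Sum>s'\<in>UNIV. \<bar>dl t s\<bar> * (\<Sum>a\<in>UNIV. P a s s' * pis s a))" by (rule sum.swap)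
    also have "\<dots> = (\<Sum>s\<in>UNIV. \<bar>dl t s\<bar> * (\<Sum>s'\<in>UNIV. \<Sum>a\<in>UNIV. P a s s' * pis s a))"
      by (simp add: sum_distrib_left)
    also have "\<dots> = dl1 t" unfolding Ppis_sum dl1_def by simp
    finally show ?thesis .
  qed
  finally show ?thesis by (simp add: algebra_simps)
qed

lemma w1_dl: assumes "t \<ge> 0" shows "w1 t \<le> dl1 t + nA * Mb * d1 t"
proof -
  have "w1 t \<le> (\<Sum>s\<in>UNIV. \<Sum>a\<in>UNIV. \<bar>dl t s\<bar> * pis s a + nA * Mb * \<bar>pit t s a - pis s a\<bar>)"
    unfolding w1_def
  proof (intro sum_mono)
    fix s a
    have "\<bar>dl t s * pis s a + ut t s * (pit t s a - pis s a)\<bar> \<le> \<bar>dl t s * pis s a\<bar> + \<bar>ut t s * (pit t s a - pis s a)\<bar>"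
      by (rule abs_triangle_ineq)
    also have "\<dots> \<le> \<bar>dl t s\<bar> * pis s a + nA * Mb * \<bar>pit t s a - pis s a\<bar>"
      using pis_pos[of s a] ut_pos[OF assms, of s] ut_le[OF assms, of s]
      by (auto simp: abs_mult intro!: add_mono mult_right_mono)
    finally show "\<bar>U t s a - us s a\<bar> \<le> \<bar>dl t s\<bar> * pis s a + nA * Mb * \<bar>pit t s a - pis s a\<bar>"
      unfolding Udecomp[OF assms] .
  qed
  also have "\<dots> = dl1 t + nA * Mb * d1 t"
    unfolding dl1_def d1_def by (simp add: sum.distrib sum_distrib_left[symmetric] pis_sum)
  finally show ?thesis .
qed

definition "C6 = (\<alpha> + nS * nA * Mb) / (1 - \<gamma>) + nA * Mb"
definition "C7 = 2 * C6^2 * nS * nA"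

lemma C6_pos: "C6 > 0" unfolding C6_def using alpha gamma nS_ge1 nA_ge1 Mb_pos
  by (intro add_pos_pos divide_pos_pos mult_pos_pos) auto

lemma C7_pos: "C7 > 0" unfolding C7_def using C6_pos nS_ge1 nA_ge1 by simp

lemma w1_le: assumes "t \<ge> 0" shows "w1 t \<le> C6 * (z1 t + d1 t)"
proof -
  have g: "1 - \<gamma> > 0" using gamma by simp
  have "dl1 t \<le> (\<alpha> * z1 t + nS * (nA * Mb * d1 t)) / (1 - \<gamma>)"
    using dl1_bound[OF assms] g by (simp add: field_simps)
  also have "\<dots> \<le> ((\<alpha> + nS * nA * Mb) * (z1 t + d1 t)) / (1 - \<gamma>)"
  proof -
    have "\<alpha> * z1 t + nS * (nA * Mb * d1 t) \<le> (\<alpha> + nS * nA * Mb) * (z1 t + d1 t)"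
      using alpha nS_ge1 nA_ge1 Mb_pos z1_nonneg[of t] d1_nonneg[of t]
      by (simp add: algebra_simps add_increasing mult_nonneg_nonneg)
    thus ?thesis using g by (intro divide_right_mono) auto
  qed
  finally have "w1 t \<le> ((\<alpha> + nS * nA * Mb) * (z1 t + d1 t)) / (1 - \<gamma>) + nA * Mb * d1 t"
    using w1_dl[OF assms] by simp
  also have "\<dots> \<le> ((\<alpha> + nS * nA * Mb) * (z1 t + d1 t)) / (1 - \<gamma>) + nA * Mb * (z1 t + d1 t)"
    using nA_ge1 Mb_pos z1_nonneg[of t] by (intro add_left_mono mult_left_mono) auto
  also have "\<dots> = C6 * (z1 t + d1 t)" unfolding C6_def by (simp add: algebra_simps)
  finally show ?thesis .
qed

lemma U2_bound: assumes "t \<ge> 0" shows "U2 t \<le> C7 * (Z2 t + D2 t)"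
proof -
  have "U2 t \<le> (w1 t)^2" by (rule U2_le)
  also have "\<dots> \<le> (C6 * (z1 t + d1 t))^2"
    using w1_le[OF assms] w1_nonneg by (intro power_mono) auto
  also have "\<dots> = C6^2 * (z1 t + d1 t)^2" by (simp add: power_mult_distrib)
  also have "\<dots> \<le> C6^2 * (2 * ((z1 t)^2 + (d1 t)^2))"
    by (intro mult_left_mono sq_add_le) auto
  also have "\<dots> \<le> C6^2 * (2 * (nS * nA * Z2 t + nS * nA * D2 t))"
  proof -
    have "(z1 t)^2 \<le> nS * nA * Z2 t"
    proof -
      have "Z2 t \<le> nA * Z2 t" using nA_ge1 Z2_nonneg[of t] by (simp add: mult_le_cancel_right1)
      hence "nS * Z2 t \<le> nS * (nA * Z2 t)" using nS_ge1 by (intro mult_left_mono) auto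
      thus ?thesis using z1_sq[of t] by (simp add: mult.assoc)
    qed
    thus ?thesis using d1_sq[of t] by (intro mult_left_mono) auto
  qed
  also have "\<dots> = C7 * (Z2 t + D2 t)" unfolding C7_def by (simp add: algebra_simps)
  finally show ?thesis .
qed

end


context mdp begin

definition "Psi t = (\<Sum>s\<in>UNIV. e t s * z t s)"
definition "PsiD t = (\<Sum>s\<in>UNIV. Vd t s * z t s + zd t s * e t s)"

lemma Psi_deriv: assumes "t \<ge> 0" shows "(Psi has_real_derivative PsiD t) (at t within {0..})"
proof -
  have z: "((\<lambda>t. z t s') has_real_derivative zd t s') (at t within {0..})" for s'
  proof -
    have "((\<lambda>t. 1 / \<alpha> * (\<Sum>s\<in>UNIV. \<Sum>a\<in>UNIV. K a s s' * (U t s a - us s a))) has_real_derivative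
        1 / \<alpha> * (\<Sum>s\<in>UNIV. \<Sum>a\<in>UNIV. K a s s' * (Ud t s a - 0))) (at t within {0..})"
      by (intro DERIV_cmult DERIV_sum DERIV_diff DERIV_const U_ode[OF assms, folded Ud_def])
    thus ?thesis unfolding z_def zd_def by simp
  qed
  have ev: "((\<lambda>t. e t s) has_real_derivative Vd t s - 0) (at t within {0..})" for s
    unfolding e_def by (intro DERIV_diff DERIV_const V_ode[OF assms, folded Vd_def])
  have "((\<lambda>t. \<Sum>s\<in>UNIV. e t s * z t s) has_real_derivative (\<Sum>s\<in>UNIV. (Vd t s - 0) * z t s + zd t s * e t s)) (at t within {0..})"
    by (intro DERIV_sum DERIV_mult ev z)
  thus ?thesis unfolding Psi_def[abs_def] PsiD_def by simp
qed

lemma PsiD_eq: "PsiD t = - Psi t + Z2 t + (\<Sum>s\<in>UNIV. e t s * zd t s)"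
proof -
  have "Vd t s * z t s + zd t s * e t s = - (e t s * z t s) + (z t s)^2 + e t s * zd t s" for s
    unfolding Vd_eq by (simp add: algebra_simps power2_eq_square)
  hence "PsiD t = (\<Sum>s\<in>UNIV. - (e t s * z t s) + (z t s)^2 + e t s * zd t s)"
    unfolding PsiD_def by (intro sum.cong) auto
  also have "\<dots> = - (\<Sum>s\<in>UNIV. e t s * z t s) + (\<Sum>s\<in>UNIV. (z t s)^2) + (\<Sum>s\<in>UNIV. e t s * zd t s)"
    by (simp only: sum.distrib sum_negf)
  finally show ?thesis unfolding Psi_def Z2_def .
qed

lemma Psi_abs: "\<bar>Psi t\<bar> \<le> (E2 t + Z2 t) / 2"
proof -
  have "\<bar>Psi t\<bar> \<le> (\<Sum>s\<in>UNIV. \<bar>e t s\<bar> * \<bar>z t s\<bar>)" unfolding Psi_def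
    by (rule order_trans[OF sum_abs]) (simp add: abs_mult)
  also have "\<dots> \<le> (\<Sum>s\<in>UNIV. ((e t s)^2 + (z t s)^2) / 2)"
    by (rule sum_mono) (metis prod_le_half power2_abs)
  also have "\<dots> = (E2 t + Z2 t) / 2" unfolding E2_def Z2_def
    by (simp add: sum.distrib sum_divide_distrib[symmetric])
  finally show ?thesis .
qed

definition "CZ = nS * nS * nS * nA / \<alpha>^2"

lemma CZ_pos: "CZ > 0" unfolding CZ_def using nS_ge1 nA_ge1 alpha by simp

lemma Z2_CZ: "Z2 t \<le> CZ * U2 t"
proof -
  have zb: "\<bar>z t s'\<bar> \<le> w1 t / \<alpha>" for s'
  proof -
    have "\<bar>\<Sum>s\<in>UNIV. \<Sum>a\<in>UNIV. K a s s' * (U t s a - us s a)\<bar> \<le> (\<Sum>s\<in>UNIV. \<Sum>a\<in>UNIV. \<bar>K a s s' * (U t s a - us s a)\<bar>)"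
      by (rule order_trans[OF sum_abs sum_mono]) (rule sum_abs)
    also have "\<dots> \<le> w1 t" unfolding w1_def
      by (intro sum_mono) (simp add: abs_mult mult_left_le_one_le K_abs)
    finally show ?thesis unfolding z_def using alpha by (simp add: abs_mult divide_right_mono field_simps)
  qed
  have "z1 t \<le> (\<Sum>s\<in>(UNIV::'s set). w1 t / \<alpha>)" unfolding z1_def by (rule sum_mono) (rule zb)
  hence z1b: "z1 t \<le> nS * w1 t / \<alpha>" unfolding nS_def by simp
  have "Z2 t \<le> (z1 t)^2" by (rule Z2_le)
  also have "\<dots> \<le> (nS * w1 t / \<alpha>)^2" using z1b z1_nonneg by (intro power_mono) auto
  also have "\<dots> = nS^2 * (w1 t)^2 / \<alpha>^2" by (simp add: power_divide power_mult_distrib)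
  also have "\<dots> \<le> nS^2 * (nS * nA * U2 t) / \<alpha>^2"
    using w1_sq[of t] alpha by (intro divide_right_mono mult_left_mono) auto
  also have "\<dots> = CZ * U2 t" unfolding CZ_def by (simp add: power2_eq_square)
  finally show ?thesis .
qed

lemma Lyap_upper: assumes "t \<ge> 0"
  shows "Lyap t \<le> \<alpha> / 2 * E2 t + \<tau> * (1 + kc * nA) / mb * U2 t"
proof -
  have a: "(\<Sum>s\<in>UNIV. \<Sum>a\<in>UNIV. phi (us s a) (U t s a)) \<le> U2 t / mb"
  proof -
    have "(\<Sum>s\<in>UNIV. \<Sum>a\<in>UNIV. phi (us s a) (U t s a)) \<le> (\<Sum>s\<in>UNIV. \<Sum>a\<in>UNIV. (U t s a - us s a)^2 / mb)"
    proof (intro sum_mono)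
      fix s a
      have "phi (us s a) (U t s a) \<le> (us s a - U t s a)^2 / U t s a"
        using us_pos Upos[OF assms] by (intro phi_upper)
      also have "\<dots> \<le> (U t s a - us s a)^2 / mb"
        using U_lower[OF assms, of s a] mb_pos by (simp add: power2_commute divide_left_mono)
      finally show "phi (us s a) (U t s a) \<le> (U t s a - us s a)^2 / mb" .
    qed
    thus ?thesis unfolding U2_def by (simp add: sum_divide_distrib)
  qed
  have b: "(\<Sum>s\<in>UNIV. phi (uts s) (ut t s)) \<le> nA * U2 t / mb"
  proof -
    have "(\<Sum>s\<in>UNIV. phi (uts s) (ut t s)) \<le> (\<Sum>s\<in>UNIV. nA * (\<Sum>a\<in>UNIV. (U t s a - us s a)^2) / mb)"
    proof (intro sum_mono)
      fix s
      have "phi (uts s) (ut t s) \<le> (uts s - ut t s)^2 / ut t s"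
        using uts_pos' ut_pos[OF assms] by (intro phi_upper)
      also have "\<dots> \<le> (ut t s - uts s)^2 / mb"
        using ut_ge[OF assms, of s] mb_pos by (simp add: power2_commute divide_left_mono)
      also have "(ut t s - uts s)^2 \<le> nA * (\<Sum>a\<in>UNIV. (U t s a - us s a)^2)"
      proof -
        have "ut t s - uts s = (\<Sum>a\<in>UNIV. U t s a - us s a)"
          unfolding ut_def uts_def utilde_def by (simp add: sum_subtractf)
        hence "(ut t s - uts s)^2 \<le> (\<Sum>a\<in>UNIV. \<bar>U t s a - us s a\<bar>)^2"
          by (metis abs_ge_zero power2_abs power_mono sum_abs)
        also have "\<dots> \<le> nA * (\<Sum>a\<in>UNIV. (U t s a - us s a)^2)"
          unfolding nA_def by (rule ssum_l1sq)
        finally show ?thesis .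
      qed
      hence "(ut t s - uts s)^2 / mb \<le> nA * (\<Sum>a\<in>UNIV. (U t s a - us s a)^2) / mb"
        using mb_pos by (intro divide_right_mono) auto
      finally show "phi (uts s) (ut t s) \<le> nA * (\<Sum>a\<in>UNIV. (U t s a - us s a)^2) / mb" .
    qed
    thus ?thesis unfolding U2_def by (simp add: sum_divide_distrib[symmetric] sum_distrib_left)
  qed
  have "Lyap t \<le> \<alpha> / 2 * E2 t + \<tau> * (U2 t / mb + kc * (nA * U2 t / mb))"
    unfolding Lyap_def E2_def e_def using a b kc_pos tau
    by (intro add_left_mono mult_left_mono add_mono) auto
  also have "\<dots> = \<alpha> / 2 * E2 t + \<tau> * (1 + kc * nA) / mb * U2 t" by (simp add: algebra_simps add_divide_distrib)
  finally show ?thesis .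
qed

lemma Lyap_lower: assumes "t \<ge> 0"
  shows "\<alpha> / 2 * E2 t + \<tau> / (4 * Mb) * U2 t \<le> Lyap t"
proof -
  have a: "U2 t / (4 * Mb) \<le> (\<Sum>s\<in>UNIV. \<Sum>a\<in>UNIV. phi (us s a) (U t s a))"
  proof -
    have "U2 t / (4 * Mb) = (\<Sum>s\<in>UNIV. \<Sum>a\<in>UNIV. (U t s a - us s a)^2 / (4 * Mb))"
      unfolding U2_def by (simp add: sum_divide_distrib)
    also have "\<dots> \<le> (\<Sum>s\<in>UNIV. \<Sum>a\<in>UNIV. phi (us s a) (U t s a))"
    proof (intro sum_mono)
      fix s a
      have "(us s a - U t s a)^2 \<le> 4 * Mb * phi (us s a) (U t s a)"
        using us_pos Upos[OF assms] us_le_Mb U_upper[OF assms] by (intro phi_lower)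
      thus "(U t s a - us s a)^2 / (4 * Mb) \<le> phi (us s a) (U t s a)"
        using Mb_pos by (simp add: power2_commute divide_le_eq mult.commute)
    qed
    finally show ?thesis .
  qed
  have b: "0 \<le> kc * (\<Sum>s\<in>UNIV. phi (uts s) (ut t s))"
    using kc_pos uts_pos' ut_pos[OF assms] by (intro mult_nonneg_nonneg sum_nonneg phi_nonneg) (auto intro: less_imp_le)
  have "\<tau> / (4 * Mb) * U2 t \<le> \<tau> * ((\<Sum>s\<in>UNIV. \<Sum>a\<in>UNIV. phi (us s a) (U t s a)) + kc * (\<Sum>s\<in>UNIV. phi (uts s) (ut t s)))"
  proof -
    have "U2 t / (4 * Mb) \<le> (\<Sum>s\<in>UNIV. \<Sum>a\<in>UNIV. phi (us s a) (U t s a)) + kc * (\<Sum>s\<in>UNIV. phi (uts s) (ut t s))"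
      using a b by linarith
    hence "\<tau> * (U2 t / (4 * Mb)) \<le> \<tau> * ((\<Sum>s\<in>UNIV. \<Sum>a\<in>UNIV. phi (us s a) (U t s a)) + kc * (\<Sum>s\<in>UNIV. phi (uts s) (ut t s)))"
      using tau by (intro mult_left_mono) auto
    thus ?thesis by simp
  qed
  thus ?thesis unfolding Lyap_def E2_def e_def by simp
qed

end


context mdp begin

definition "beta = \<tau> * mb / 4"
definition "eps = min (min (\<alpha> / (1 + 2 * C4)) (beta / (2 * C4 + 1))) (min (\<alpha> / 2) (\<tau> / (4 * Mb * (CZ + 1))))"
definition "W t = Lyap t - eps * Psi t"
definition "WD t = LD t - eps * PsiD t"
definition "kap1 = min (\<alpha> / 2) (min beta eps / (2 * C7))"
definition "C8 = \<alpha> + \<tau> * (1 + kc * nA) / mb + eps * CZ + eps"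
definition "c9 = min (\<alpha> / 4) (\<tau> / (8 * Mb))"
definition "kap = kap1 / C8"

lemma beta_pos: "beta > 0" unfolding beta_def using tau mb_pos by simp
lemma eps_pos: "eps > 0" unfolding eps_def using alpha beta_pos C4_pos tau Mb_pos CZ_pos by simp
lemma eps1: "eps * (1/2 + C4) \<le> \<alpha> / 2"
proof -
  have "eps \<le> \<alpha> / (1 + 2 * C4)" unfolding eps_def by simp
  hence "eps * (1 + 2 * C4) \<le> \<alpha>" using C4_pos by (simp add: field_simps)
  thus ?thesis by (simp add: algebra_simps)
qed
lemma eps2: "eps * C4 \<le> beta / 2"
proof -
  have "eps \<le> beta / (2 * C4 + 1)" unfolding eps_def by simp
  hence "eps * (2 * C4 + 1) \<le> beta" using C4_pos by (simp add: field_simps)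
  thus ?thesis using eps_pos by (simp add: algebra_simps)
qed
lemma eps3: "eps \<le> \<alpha> / 2" unfolding eps_def by (rule order_trans[OF min.cobounded2 min.cobounded1])
lemma eps4: "eps * CZ \<le> \<tau> / (4 * Mb)"
proof -
  have "eps \<le> \<tau> / (4 * Mb * (CZ + 1))" unfolding eps_def by (rule order_trans[OF min.cobounded2 min.cobounded2])
  hence h: "eps \<le> (\<tau> / (4 * Mb)) / (CZ + 1)" by (simp add: mult.commute)
  have c1: "0 < CZ + 1" using CZ_pos by simp
  have "eps * (CZ + 1) \<le> \<tau> / (4 * Mb)" using h by (subst (asm) pos_le_divide_eq[OF c1])
  thus ?thesis using eps_pos by (simp add: algebra_simps)
qed

lemma kap1_pos: "kap1 > 0" unfolding kap1_def using alpha beta_pos eps_pos C7_pos by simp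
lemma C8_pos: "C8 > 0" unfolding C8_def using alpha tau kc_pos nA_ge1 mb_pos eps_pos CZ_pos
  by (intro add_pos_pos add_pos_nonneg divide_pos_pos mult_pos_pos) auto
lemma c9_pos: "c9 > 0" unfolding c9_def using alpha tau Mb_pos by simp
lemma kap_pos: "kap > 0" unfolding kap_def using kap1_pos C8_pos by simp

lemma W_deriv: "t \<ge> 0 \<Longrightarrow> (W has_real_derivative WD t) (at t within {0..})"
  unfolding W_def[abs_def] WD_def by (intro DERIV_diff DERIV_cmult Lyap_deriv Psi_deriv)

lemma LD_bound: assumes "t \<ge> 0" shows "LD t \<le> - \<alpha> * E2 t - beta * D2 t"
proof -
  have "mb / 4 * D2 t = (\<Sum>s\<in>UNIV. mb * (\<Sum>a\<in>UNIV. (pis s a - pit t s a)^2 / 4))"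
    unfolding D2_def by (simp add: sum_distrib_left sum_divide_distrib power2_commute)
  also have "\<dots> \<le> (\<Sum>s\<in>UNIV. uts s * (\<Sum>a\<in>UNIV. phi (pis s a) (pit t s a)))"
  proof (rule sum_mono, rule mult_mono)
    fix s
    show "mb \<le> uts s" by (rule uts_ge)
    show "0 \<le> uts s" using uts_pos'[of s] by simp
    show "(\<Sum>a\<in>UNIV. (pis s a - pit t s a)^2 / 4) \<le> (\<Sum>a\<in>UNIV. phi (pis s a) (pit t s a))"
    proof (intro sum_mono)
      fix a
      have "(pis s a - pit t s a)^2 \<le> 4 * 1 * phi (pis s a) (pit t s a)"
        using pis_pos pit_pos[OF assms] pis_le1 pit_le1[OF assms] by (intro phi_lower)
      thus "(pis s a - pit t s a)^2 / 4 \<le> phi (pis s a) (pit t s a)" by simp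
    qed
    show "0 \<le> (\<Sum>a\<in>UNIV. (pis s a - pit t s a)^2 / 4)" by (simp add: sum_nonneg)
  qed
  also have "\<dots> \<le> Dis t" by (rule Dis_ge[OF assms])
  finally have "mb / 4 * D2 t \<le> Dis t" .
  hence "\<tau> * (mb / 4 * D2 t) \<le> \<tau> * Dis t" using tau by (intro mult_left_mono) auto
  hence "beta * D2 t \<le> \<tau> * Dis t" unfolding beta_def by simp
  thus ?thesis unfolding LD_eq[OF assms] E2_def by simp
qed

lemma WD_bound: assumes "t \<ge> 0" shows "WD t \<le> - (\<alpha> / 2) * E2 t - (beta / 2) * D2 t - (eps / 2) * Z2 t"
proof -
  have "Psi t \<le> (E2 t + Z2 t) / 2" using Psi_abs[of t] by linarith
  hence p: "eps * Psi t \<le> eps * ((E2 t + Z2 t) / 2)" using eps_pos by (intro mult_left_mono) auto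
  have q: "- (eps * (\<Sum>s\<in>UNIV. e t s * zd t s)) \<le> eps * (C4 * (E2 t + D2 t))"
  proof -
    have "- (\<Sum>s\<in>UNIV. e t s * zd t s) \<le> C4 * (E2 t + D2 t)" using ezd_bound[OF assms] by linarith
    hence "eps * (- (\<Sum>s\<in>UNIV. e t s * zd t s)) \<le> eps * (C4 * (E2 t + D2 t))"
      using eps_pos by (intro mult_left_mono) auto
    thus ?thesis by simp
  qed
  have r1: "eps * (1/2 + C4) * E2 t \<le> \<alpha> / 2 * E2 t" using eps1 E2_nonneg by (intro mult_right_mono) auto
  have r2: "eps * C4 * D2 t \<le> beta / 2 * D2 t" using eps2 D2_nonneg by (intro mult_right_mono) auto
  have "WD t = LD t + eps * Psi t - eps * Z2 t - eps * (\<Sum>s\<in>UNIV. e t s * zd t s)"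
    unfolding WD_def PsiD_eq by (simp add: algebra_simps)
  also have "\<dots> \<le> (- \<alpha> * E2 t - beta * D2 t) + eps * ((E2 t + Z2 t) / 2) - eps * Z2 t + eps * (C4 * (E2 t + D2 t))"
    using LD_bound[OF assms] p q by linarith
  also have "\<dots> = - \<alpha> * E2 t - beta * D2 t - (eps / 2) * Z2 t + eps * (1/2 + C4) * E2 t + eps * C4 * D2 t"
    by (simp add: algebra_simps)
  also have "\<dots> \<le> - (\<alpha> / 2) * E2 t - (beta / 2) * D2 t - (eps / 2) * Z2 t"
    using r1 r2 by linarith
  finally show ?thesis .
qed

lemma WD_bound2: assumes "t \<ge> 0" shows "WD t \<le> - kap1 * (E2 t + U2 t)"
proof -
  define mn where "mn = min beta eps"
  have mn: "mn > 0" "mn \<le> beta" "mn \<le> eps" unfolding mn_def using beta_pos eps_pos by auto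
  have a: "(beta / 2) * D2 t + (eps / 2) * Z2 t \<ge> mn / 2 * (Z2 t + D2 t)"
  proof -
    have "mn * D2 t \<le> beta * D2 t" "mn * Z2 t \<le> eps * Z2 t"
      using mn D2_nonneg[of t] Z2_nonneg[of t] by (auto intro: mult_right_mono)
    thus ?thesis by (simp add: algebra_simps)
  qed
  have "U2 t / C7 \<le> Z2 t + D2 t" using U2_bound[OF assms] C7_pos by (simp add: divide_le_eq mult.commute)
  hence "mn / 2 * (U2 t / C7) \<le> mn / 2 * (Z2 t + D2 t)" using mn by (intro mult_left_mono) auto
  moreover have "mn / (2 * C7) * U2 t = mn / 2 * (U2 t / C7)" by simp
  ultimately have b: "(beta / 2) * D2 t + (eps / 2) * Z2 t \<ge> mn / (2 * C7) * U2 t" using a by linarith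
  have c: "kap1 * U2 t \<le> mn / (2 * C7) * U2 t"
    unfolding kap1_def mn_def[symmetric] using U2_nonneg by (intro mult_right_mono) auto
  have d: "kap1 * E2 t \<le> \<alpha> / 2 * E2 t"
    unfolding kap1_def using E2_nonneg by (intro mult_right_mono) auto
  show ?thesis using WD_bound[OF assms] b c d by (simp add: algebra_simps)
qed

lemma W_upper: assumes "t \<ge> 0" shows "W t \<le> C8 * (E2 t + U2 t)"
proof -
  have "- Psi t \<le> (E2 t + Z2 t) / 2" using Psi_abs[of t] by linarith
  hence "eps * (- Psi t) \<le> eps * ((E2 t + Z2 t) / 2)" using eps_pos by (intro mult_left_mono) auto
  hence "- eps * Psi t \<le> eps * ((E2 t + Z2 t) / 2)" by simp
  also have "\<dots> \<le> eps * (E2 t + CZ * U2 t)"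
  proof -
    have "0 \<le> CZ * U2 t" using CZ_pos U2_nonneg[of t] by simp
    moreover have "(E2 t + Z2 t) / 2 = E2 t / 2 + Z2 t / 2" by (simp add: add_divide_distrib)
    ultimately have "(E2 t + Z2 t) / 2 \<le> E2 t + CZ * U2 t" using Z2_CZ[of t] E2_nonneg[of t] by linarith
    thus ?thesis using eps_pos by (intro mult_left_mono) auto
  qed
  also have "\<dots> = eps * E2 t + eps * CZ * U2 t" by (simp add: algebra_simps)
  finally have 1: "- eps * Psi t \<le> eps * E2 t + eps * CZ * U2 t" .
  define A where "A = \<tau> * (1 + kc * nA) / mb"
  have 2: "\<alpha> / 2 * E2 t \<le> \<alpha> * E2 t" using alpha E2_nonneg[of t] by simp
  have 3: "0 \<le> eps * U2 t" "0 \<le> A * E2 t" "0 \<le> eps * CZ * E2 t" "0 \<le> \<alpha> * U2 t"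
    unfolding A_def using eps_pos U2_nonneg[of t] E2_nonneg[of t] tau kc_pos nA_ge1 mb_pos CZ_pos alpha by auto
  have "W t \<le> \<alpha> / 2 * E2 t + A * U2 t + eps * E2 t + eps * CZ * U2 t"
    unfolding W_def A_def using Lyap_upper[OF assms] 1 by simp
  also have "\<dots> \<le> C8 * (E2 t + U2 t)"
  proof -
    have "C8 * (E2 t + U2 t) = \<alpha> * E2 t + \<alpha> * U2 t + A * E2 t + A * U2 t + eps * CZ * E2 t + eps * CZ * U2 t + eps * E2 t + eps * U2 t"
      unfolding C8_def A_def[symmetric] by (simp add: algebra_simps)
    thus ?thesis using 2 3 by linarith
  qed
  finally show ?thesis .
qed

lemma W_lower: assumes "t \<ge> 0" shows "c9 * (E2 t + U2 t) \<le> W t"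
proof -
  have "Psi t \<le> (E2 t + Z2 t) / 2" using Psi_abs[of t] by linarith
  hence "eps * Psi t \<le> eps * ((E2 t + Z2 t) / 2)" using eps_pos by (intro mult_left_mono) auto
  also have "\<dots> \<le> eps / 2 * E2 t + eps * CZ / 2 * U2 t"
    using Z2_CZ[of t] eps_pos by (simp add: field_simps)
  also have "\<dots> \<le> \<alpha> / 4 * E2 t + \<tau> / (8 * Mb) * U2 t"
  proof -
    have "eps / 2 * E2 t \<le> \<alpha> / 4 * E2 t" using eps3 E2_nonneg[of t] by (intro mult_right_mono) auto
    moreover have "eps * CZ / 2 * U2 t \<le> \<tau> / (8 * Mb) * U2 t" using eps4 U2_nonneg[of t] Mb_pos
      by (intro mult_right_mono) (auto simp: field_simps)
    ultimately show ?thesis by linarith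
  qed
  finally have 1: "eps * Psi t \<le> \<alpha> / 4 * E2 t + \<tau> / (8 * Mb) * U2 t" .
  have 2: "c9 * E2 t \<le> \<alpha> / 4 * E2 t" "c9 * U2 t \<le> \<tau> / (8 * Mb) * U2 t"
  proof -
    have "c9 \<le> \<alpha> / 4" "c9 \<le> \<tau> / (8 * Mb)" unfolding c9_def by auto
    thus "c9 * E2 t \<le> \<alpha> / 4 * E2 t" "c9 * U2 t \<le> \<tau> / (8 * Mb) * U2 t"
      using E2_nonneg[of t] U2_nonneg[of t] by (meson mult_right_mono)+
  qed
  show ?thesis unfolding W_def using Lyap_lower[OF assms] 1 2 by (simp add: algebra_simps)
qed

lemma WD_kap: assumes "t \<ge> 0" shows "WD t \<le> - kap * W t"
proof -
  have "W t / C8 \<le> E2 t + U2 t" using W_upper[OF assms] C8_pos by (simp add: divide_le_eq mult.commute)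
  hence "kap1 * (W t / C8) \<le> kap1 * (E2 t + U2 t)" using kap1_pos by (intro mult_left_mono) auto
  thus ?thesis using WD_bound2[OF assms] unfolding kap_def by simp
qed

lemma W_decay: assumes "t \<ge> 0" shows "W t \<le> W 0 * exp (- kap * t)"
proof -
  define f where "f t = W t * exp (kap * t)" for t
  have "f t \<le> f 0"
  proof (rule mono_from_deriv[where f' = "\<lambda>t. WD t * exp (kap * t) + W t * (exp (kap * t) * kap)"])
    fix t :: real assume t: "t \<ge> 0"
    have "((\<lambda>t. exp (kap * t)) has_real_derivative exp (kap * t) * kap) (at t within {0..})"
      using has_field_derivative_at_within[OF DERIV_fun_exp[OF DERIV_cmult_Id[of kap]]] by simp
    thus "(f has_real_derivative WD t * exp (kap * t) + W t * (exp (kap * t) * kap)) (at t within {0..})"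
      unfolding f_def[abs_def] using W_deriv[OF t] by (intro DERIV_mult'[THEN DERIV_cong]) (auto simp: algebra_simps)
    show "WD t * exp (kap * t) + W t * (exp (kap * t) * kap) \<le> 0"
    proof -
      have "(WD t + kap * W t) * exp (kap * t) \<le> 0"
        using WD_kap[OF t] by (intro mult_nonpos_nonneg) auto
      thus ?thesis by (simp add: algebra_simps)
    qed
  qed (rule assms)
  hence "W t * exp (kap * t) \<le> W 0" unfolding f_def by simp
  hence "W t * exp (kap * t) * exp (- kap * t) \<le> W 0 * exp (- kap * t)" by (intro mult_right_mono) auto
  thus ?thesis by (simp add: mult.assoc exp_add[symmetric])
qed

lemma final: "\<exists>\<kappa> C. \<kappa> > 0 \<and> (\<forall>t\<ge>0.
           (\<Sum>s\<in>UNIV. \<bar>V t s - vs s\<bar>) + (\<Sum>s\<in>UNIV. \<Sum>a\<in>UNIV. \<bar>U t s a - us s a\<bar>)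
             \<le> C * exp (- \<kappa> * t))"
proof (intro exI conjI allI impI)
  define Cf where "Cf = 2 * nS * nA * W 0 / c9"
  show "kap / 2 > 0" using kap_pos by simp
  fix t :: real assume t: "t \<ge> 0"
  have W0: "W 0 \<ge> 0" using W_lower[of 0] c9_pos E2_nonneg U2_nonneg
    by (smt (verit) mult_nonneg_nonneg order.refl)
  have Cf: "Cf \<ge> 0" unfolding Cf_def using W0 nS_ge1 nA_ge1 c9_pos by simp
  have "(e1 t + w1 t)^2 \<le> 2 * ((e1 t)^2 + (w1 t)^2)" by (rule sq_add_le)
  also have "\<dots> \<le> 2 * (nS * nA * E2 t + nS * nA * U2 t)"
  proof -
    have "E2 t \<le> nA * E2 t" using nA_ge1 E2_nonneg[of t] by (simp add: mult_le_cancel_right1)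
    hence "nS * E2 t \<le> nS * (nA * E2 t)" using nS_ge1 by (intro mult_left_mono) auto
    thus ?thesis using e1_sq[of t] w1_sq[of t] by (simp add: mult.assoc)
  qed
  also have "\<dots> = 2 * nS * nA * (E2 t + U2 t)" by (simp add: algebra_simps)
  also have "\<dots> \<le> 2 * nS * nA * (W t / c9)"
  proof -
    have "E2 t + U2 t \<le> W t / c9" using W_lower[OF t] c9_pos by (simp add: le_divide_eq mult.commute)
    thus ?thesis using nS_ge1 nA_ge1 by (intro mult_left_mono) auto
  qed
  also have "\<dots> \<le> 2 * nS * nA * (W 0 * exp (- kap * t) / c9)"
    using W_decay[OF t] c9_pos nS_ge1 nA_ge1 by (intro mult_left_mono divide_right_mono) auto
  also have "\<dots> = Cf * exp (- kap * t)" unfolding Cf_def by simp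
  finally have sq: "(e1 t + w1 t)^2 \<le> Cf * exp (- kap * t)" .
  hence "e1 t + w1 t \<le> sqrt (Cf * exp (- kap * t))" by (rule real_le_rsqrt)
  also have "sqrt (Cf * exp (- kap * t)) = sqrt Cf * exp (- (kap / 2) * t)"
  proof -
    have "sqrt (exp (- kap * t)) = exp (- (kap / 2) * t)"
      by (rule real_sqrt_unique) (simp_all add: power2_eq_square exp_add[symmetric])
    thus ?thesis by (simp add: real_sqrt_mult)
  qed
  finally show "(\<Sum>s\<in>UNIV. \<bar>V t s - vs s\<bar>) + (\<Sum>s\<in>UNIV. \<Sum>a\<in>UNIV. \<bar>U t s a - us s a\<bar>)
      \<le> sqrt Cf * exp (- (kap / 2) * t)" unfolding e1_def w1_def e_def .
qed

end

theorem theorem3p4: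
  fixes P :: "'a::finite \<Rightarrow> 's::finite \<Rightarrow> 's \<Rightarrow> real"
    and r :: "'s \<Rightarrow> 'a \<Rightarrow> real"
    and \<gamma> \<tau> \<alpha> c :: real
    and vs :: "'s \<Rightarrow> real" and us :: "'s \<Rightarrow> 'a \<Rightarrow> real"
    and V :: "real \<Rightarrow> 's \<Rightarrow> real" and U :: "real \<Rightarrow> 's \<Rightarrow> 'a \<Rightarrow> real"
  assumes P_nonneg: "\<And>a s s'. P a s s' \<ge> 0"
    and P_stoch: "\<And>a s. (\<Sum>s'\<in>UNIV. P a s s') = 1"
    and r_nonneg: "\<And>s a. r s a \<ge> 0"
    and gamma: "0 < \<gamma>" "\<gamma> < 1"
    and tau: "\<tau> > 0"
    and alpha: "\<alpha> > 0"
    and c: "0 < c" "c < 1"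
    and saddle: "is_saddle \<alpha> \<gamma> \<tau> P r vs us"
    and U_pos: "\<And>t. t \<ge> 0 \<Longrightarrow> pos_u (U t)"
    and V_ode: "\<And>t s'. t \<ge> 0 \<Longrightarrow>
        ((\<lambda>t. V t s') has_real_derivative v_rhs \<alpha> \<gamma> P (V t) (U t) s') (at t within {0..})"
    and U_ode: "\<And>t s a. t \<ge> 0 \<Longrightarrow>
        ((\<lambda>t. U t s a) has_real_derivative u_rhs c \<gamma> \<tau> P r (V t) (U t) s a) (at t within {0..})"
  shows "\<exists>\<kappa> C. \<kappa> > 0 \<and> (\<forall>t\<ge>0.
           (\<Sum>s\<in>UNIV. \<bar>V t s - vs s\<bar>) + (\<Sum>s\<in>UNIV. \<Sum>a\<in>UNIV. \<bar>U t s a - us s a\<bar>)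
             \<le> C * exp (- \<kappa> * t))"
proof -
  have "mdp P r \<gamma> \<tau> \<alpha> c vs us V U"
    by (unfold_locales) (fact P_nonneg P_stoch r_nonneg gamma tau alpha c saddle U_pos V_ode U_ode)+
  thus ?thesis by (rule mdp.final)
qed

end
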